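(* Fix $T>0$ and assume the nominal disturbance distribution satisfies $\mathbb{E}_{\mathbb{P}_T^\circ}[\boldsymbol{\xi}_T\boldsymbol{\xi}_T^\ast]=\mathcal{I}$. Then $\mathcal{K}_T^\circ:=\mathcal{L}_T\mathcal{H}_T^\ast(\mathcal{I}+\mathcal{H}_T\mathcal{H}_T^\ast)^{-1}$ is the unique optimal estimator, among all (not necessarily causal) linear estimators $\mathcal{K}_T\in\mathbb{R}^{Td_s\times Td_y}$, minimizing the worst-case mean-squared error $\mathsf{E}_T(\mathcal{K}_T,\rho_T)=\sup_{\mathbb{P}_T\in\mathcal{W}_T(\mathbb{P}_T^\circ,\rho_T)}\mathbb{E}_{\mathbb{P}_T}\|\mathcal{T}_{\mathcal{K}_T}\boldsymbol{\xi}_T\|^2$, for every $\rho_T\ge 0$.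
   Context: State-space model: $x_{t+1}=Ax_t+Bw_t$, $y_t=C_yx_t+v_t$, $s_t=C_sx_t$, with $(A,C_y)$, $(A,C_s)$ detectable and $(A,B)$ controllable. For horizon $T$: $\mathbf{y}_T=[y_0;\dots;y_{T-1}]$, $\mathbf{s}_T=[s_0;\dots;s_{T-1}]$, $\mathbf{w}_T=[x_0;w_0;\dots;w_{T-2}]$, $\mathbf{v}_T=[v_0;\dots;v_{T-1}]$, $\boldsymbol{\xi}_T=[\mathbf{w}_T;\mathbf{v}_T]$, and $\mathbf{y}_T=\mathcal{H}_T\mathbf{w}_T+\mathbf{v}_T$, $\mathbf{s}_T=\mathcal{L}_T\mathbf{w}_T$ where $\mathcal{H}_T,\mathcal{L}_T$ are the block lower-triangular matrices determined by the model (the $t$-th block of $\mathcal{H}_T\mathbf{w}_T$ is $C_yA^tx_0+\sum_{\tau<t}C_yA^{t-1-\tau}Bw_\tau$, similarly for $\mathcal{L}_T$ with $C_s$). A linear estimator $\mathcal{K}_T$ gives $\widehat{\mathbf{s}}_T=\mathcal{K}_T\mathbf{y}_T$ and error $\widehat{\mathbf{s}}_T-\mathbf{s}_T=\mathcal{T}_{\mathcal{K}_T}\boldsymbol{\xi}_T$ with $\mathcal{T}_{\mathcal{K}_T}=[\mathcal{K}_T\mathcal{H}_T-\mathcal{L}_T,\ \mathcal{K}_T]$. Disturbances are zero-mean. $\mathcal{W}_T(\mathbb{P}_T^\circ,\rho_T)$ is the set of distributions with finite second moment at Wasserstein-2 distance at most $\rho_T$ from the nominal $\mathbb{P}_T^\circ$,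 where $\mathsf{W}_2(\mathbb{P}_1,\mathbb{P}_2)=(\inf\mathbb{E}\|\mathbf{w}_1-\mathbf{w}_2\|^2)^{1/2}$ over couplings. *)

theory Defs
  imports "Jordan_Normal_Form.Gauss_Jordan_Elimination" "HOL-Probability.Probability"
begin

definition detectable :: "real mat \<Rightarrow> real mat \<Rightarrow> bool" where
  "detectable A C \<longleftrightarrow>
     (\<forall>(lam::complex) v. v \<in> carrier_vec (dim_row A) \<and> v \<noteq> 0\<^sub>v (dim_row A)
        \<and> map_mat complex_of_real A *\<^sub>v v = lam \<cdot>\<^sub>v v
        \<and> map_mat complex_of_real C *\<^sub>v v = 0\<^sub>v (dim_row C)
        \<longrightarrow> cmod lam < 1)"

text \<open>Controllability of (A,B) (Kalman rank condition: the controllability matrix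
  [B, AB, ..., A^(n-1) B] has full row rank n, i.e. no nonzero left annihilator).\<close>
definition controllable :: "real mat \<Rightarrow> real mat \<Rightarrow> bool" where
  "controllable A B \<longleftrightarrow>
     (\<forall>v \<in> carrier_vec (dim_row A).
        (\<forall>k < dim_row A. transpose_mat (A ^\<^sub>m k * B) *\<^sub>v v = 0\<^sub>v (dim_col B))
        \<longrightarrow> v = 0\<^sub>v (dim_row A))"

text \<open>Block lower-triangular matrix mapping w_T = [x_0; w_0; ...; w_(T-2)] to
  [C x_0; ...; C x_(T-1)]: block (t, x_0) is C A^t, block (t, w_tau) is
  C A^(t-1-tau) B for tau < t and 0 otherwise.\<close>
definition horizon_op :: "real mat \<Rightarrow> real mat \<Rightarrow> real mat \<Rightarrow> nat \<Rightarrow> real mat" where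
  "horizon_op A B C T =
     (let dx = dim_row A; dw = dim_col B; d = dim_row C in
      Matrix.mat (T * d) (dx + (T - 1) * dw) (\<lambda>(r, c).
        let t = r div d; i = r mod d in
        if c < dx then (C * A ^\<^sub>m t) $$ (i, c)
        else (let tau = (c - dx) div dw; j = (c - dx) mod dw in
              if tau < t then (C * A ^\<^sub>m (t - 1 - tau) * B) $$ (i, j) else 0)))"

text \<open>Error operator T_K = [K H - L, K], acting on xi = [w; v].\<close>
definition err_op :: "real mat \<Rightarrow> real mat \<Rightarrow> real mat \<Rightarrow> real mat" where
  "err_op K H L =
     Matrix.mat (dim_row L) (dim_col H + dim_col K) (\<lambda>(r, c).
        if c < dim_col H then (K * H - L) $$ (r, c) else K $$ (r, c - dim_col H))"

definition central_estimator :: "real mat \<Rightarrow> real mat \<Rightarrow> real mat" where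
  "central_estimator H L =
     L * transpose_mat H * the (mat_inverse (1\<^sub>m (dim_row H) + H * transpose_mat H))"

definition RN :: "nat \<Rightarrow> (nat \<Rightarrow> real) measure" where
  "RN N = (\<Pi>\<^sub>M i \<in> {..<N}. borel)"

definition sqnorm :: "nat \<Rightarrow> (nat \<Rightarrow> real) \<Rightarrow> real" where
  "sqnorm N x = (\<Sum>i<N. (x i)\<^sup>2)"

definition distrs2 :: "nat \<Rightarrow> (nat \<Rightarrow> real) measure set" where
  "distrs2 N = {P. prob_space P \<and> sets P = sets (RN N)
                   \<and> (\<integral>\<^sup>+ x. ennreal (sqnorm N x) \<partial>P) < \<infinity>}"

definition couplings :: "nat \<Rightarrow> (nat \<Rightarrow> real) measure \<Rightarrow> (nat \<Rightarrow> real) measure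
                          \<Rightarrow> ((nat \<Rightarrow> real) \<times> (nat \<Rightarrow> real)) measure set" where
  "couplings N P1 P2 = {C. prob_space C \<and> sets C = sets (RN N \<Otimes>\<^sub>M RN N)
                           \<and> distr C (RN N) fst = P1 \<and> distr C (RN N) snd = P2}"

definition wasserstein2_sq :: "nat \<Rightarrow> (nat \<Rightarrow> real) measure \<Rightarrow> (nat \<Rightarrow> real) measure \<Rightarrow> ennreal" where
  "wasserstein2_sq N P1 P2 =
     (INF C \<in> couplings N P1 P2. \<integral>\<^sup>+ z. ennreal (sqnorm N (\<lambda>i. fst z i - snd z i)) \<partial>C)"

text \<open>Wasserstein ball W(P0, rho): W_2(P, P0) <= rho, equivalently W_2(P,P0)^2 <= rho^2 (rho >= 0).\<close>
definition wball :: "nat \<Rightarrow> (nat \<Rightarrow> real) measure \<Rightarrow> real \<Rightarrow> (nat \<Rightarrow> real) measure set" where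
  "wball N P0 rho = {P \<in> distrs2 N. wasserstein2_sq N P P0 \<le> ennreal (rho\<^sup>2)}"

definition worst_mse :: "real mat \<Rightarrow> real mat \<Rightarrow> real mat \<Rightarrow> (nat \<Rightarrow> real) measure \<Rightarrow> real \<Rightarrow> ennreal" where
  "worst_mse H L K P0 rho =
     (let Tk = err_op K H L; N = dim_col Tk in
      SUP P \<in> wball N P0 rho.
        \<integral>\<^sup>+ xi. ennreal ((Tk *\<^sub>v Matrix.vec N xi) \<bullet> (Tk *\<^sub>v Matrix.vec N xi)) \<partial>P)"

end

theory Submission
  imports Defs "Jordan_Normal_Form.Determinant"
begin

definition nsq :: "real Matrix.vec \<Rightarrow> real" where "nsq v = scalar_prod v v"
definition fro :: "real mat \<Rightarrow> real" where
  "fro X = (\<Sum>i<dim_row X. \<Sum>j<dim_col X. (X $$ (i,j))^2)"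

lemma nsq_sum: "v \<in> carrier_vec n \<Longrightarrow> nsq v = (\<Sum>i<n. (v$i)^2)"
  by (auto simp: nsq_def scalar_prod_def power2_eq_square atLeast0LessThan)

lemma nsq_nonneg: "0 \<le> nsq v"
  by (auto simp: nsq_def scalar_prod_def intro!: sum_nonneg)

lemma fro_nonneg: "0 \<le> fro X"
  by (auto simp: fro_def intro!: sum_nonneg)

lemma cs_vec: assumes "v \<in> carrier_vec n" "w \<in> carrier_vec n"
  shows "(scalar_prod v w)^2 \<le> nsq v * nsq w"
proof -
  have "scalar_prod v w = (\<Sum>i<n. v$i * w$i)" using assms
    by (auto simp: scalar_prod_def atLeast0LessThan)
  thus ?thesis using Cauchy_Schwarz_ineq_sum[of "\<lambda>i. v$i" "\<lambda>i. w$i" "{..<n}"]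
    nsq_sum[OF assms(1)] nsq_sum[OF assms(2)] by simp
qed

lemma entry_bound: assumes "v \<in> carrier_vec n" "i < n" shows "(v$i)^2 \<le> nsq v"
proof -
  have "(v$i)^2 \<le> (\<Sum>k<n. (v$k)^2)"
    by (rule member_le_sum[of i "{..<n}" "\<lambda>k. (v$k)^2"]) (use assms in auto)
  thus ?thesis using nsq_sum[OF assms(1)] by simp
qed

lemma nsq_zero: assumes "v \<in> carrier_vec n" "nsq v = 0" shows "v = 0\<^sub>v n"
proof (rule eq_vecI)
  fix i assume "i < dim_vec (0\<^sub>v n)"
  hence i: "i < n" by simp
  have "(v$i)^2 \<le> 0" using entry_bound[OF assms(1) i] assms(2) by simp
  thus "v $ i = 0\<^sub>v n $ i" using i by simp
qed (use assms in auto)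

lemma nsq_smult: "nsq (c \<cdot>\<^sub>v v) = c^2 * nsq v"
  by (simp add: nsq_def power2_eq_square)

lemma fro_rows: assumes "X \<in> carrier_mat m n"
  shows "fro X = (\<Sum>i<m. nsq (Matrix.row X i))"
proof -
  have "nsq (Matrix.row X i) = (\<Sum>j<n. (X $$ (i,j))^2)" if "i < m" for i
    using assms that by (subst nsq_sum[of _ n]) auto
  thus ?thesis using assms by (auto simp: fro_def intro!: sum.cong)
qed

lemma fro_cols: assumes "X \<in> carrier_mat m n"
  shows "fro X = (\<Sum>j<n. nsq (col X j))"
proof -
  have "nsq (col X j) = (\<Sum>i<m. (X $$ (i,j))^2)" if "j < n" for j
    using assms that by (subst nsq_sum[of _ m]) auto
  hence "(\<Sum>j<n. nsq (col X j)) = (\<Sum>j<n. \<Sum>i<m. (X $$ (i,j))^2)" by simp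
  also have "\<dots> = (\<Sum>i<m. \<Sum>j<n. (X $$ (i,j))^2)" by (rule sum.swap)
  finally show ?thesis using assms by (simp add: fro_def)
qed

lemma mat_vec_bound: assumes X: "X \<in> carrier_mat m n" and u: "u \<in> carrier_vec n"
  shows "nsq (X *\<^sub>v u) \<le> fro X * nsq u"
proof -
  have "nsq (X *\<^sub>v u) = (\<Sum>i<m. (scalar_prod (Matrix.row X i) u)^2)"
    using X u by (auto simp: nsq_sum[of _ m])
  also have "\<dots> \<le> (\<Sum>i<m. nsq (Matrix.row X i) * nsq u)"
    by (rule sum_mono, rule cs_vec[of _ n]) (use X u in auto)
  also have "\<dots> = fro X * nsq u" using fro_rows[OF X] by (simp add: sum_distrib_right)
  finally show ?thesis .
qed

lemma quad_transpose: fixes Tm :: "real mat" assumes T: "Tm \<in> carrier_mat m n" and x: "x \<in> carrier_vec n"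
  shows "scalar_prod x ((transpose_mat Tm * Tm) *\<^sub>v x) = nsq (Tm *\<^sub>v x)"
proof -
  have "(transpose_mat Tm * Tm) *\<^sub>v x = transpose_mat Tm *\<^sub>v (Tm *\<^sub>v x)"
    using T x by (auto intro: assoc_mult_mat_vec)
  moreover have "scalar_prod x (transpose_mat Tm *\<^sub>v (Tm *\<^sub>v x)) = scalar_prod (transpose_mat Tm *\<^sub>v (Tm *\<^sub>v x)) x"
    by (rule comm_scalar_prod[where n = n]) (use T x in auto)
  moreover have "\<dots> = scalar_prod (Tm *\<^sub>v x) (Tm *\<^sub>v x)"
    by (rule transpose_vec_mult_scalar[OF T x]) (use T x in auto)
  ultimately show ?thesis by (simp add: nsq_def)
qed

lemma bilin_transpose: fixes Tm :: "real mat" assumes T: "Tm \<in> carrier_mat m n" and x: "x \<in> carrier_vec n" and y: "y \<in> carrier_vec n"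
  shows "scalar_prod x ((transpose_mat Tm * Tm) *\<^sub>v y) = scalar_prod (Tm *\<^sub>v x) (Tm *\<^sub>v y)"
proof -
  have "(transpose_mat Tm * Tm) *\<^sub>v y = transpose_mat Tm *\<^sub>v (Tm *\<^sub>v y)"
    using T y by (auto intro: assoc_mult_mat_vec)
  moreover have "scalar_prod x (transpose_mat Tm *\<^sub>v (Tm *\<^sub>v y)) = scalar_prod (transpose_mat Tm *\<^sub>v (Tm *\<^sub>v y)) x"
    by (rule comm_scalar_prod[where n = n]) (use T x y in auto)
  moreover have "\<dots> = scalar_prod (Tm *\<^sub>v y) (Tm *\<^sub>v x)"
    by (rule transpose_vec_mult_scalar[OF T x]) (use T y in auto)
  moreover have "\<dots> = scalar_prod (Tm *\<^sub>v x) (Tm *\<^sub>v y)"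
    by (rule comm_scalar_prod[where n = m]) (use T x y in auto)
  ultimately show ?thesis by simp
qed

lemma sym_form: fixes Q :: "real mat" assumes Q: "Q \<in> carrier_mat n n" and sym: "transpose_mat Q = Q"
  and x: "x \<in> carrier_vec n" and y: "y \<in> carrier_vec n"
  shows "scalar_prod x (Q *\<^sub>v y) = scalar_prod y (Q *\<^sub>v x)"
proof -
  have "scalar_prod y (Q *\<^sub>v x) = scalar_prod (transpose_mat Q *\<^sub>v y) x"
    by (rule transpose_vec_mult_scalar[OF Q x y, symmetric])
  also have "\<dots> = scalar_prod x (transpose_mat Q *\<^sub>v y)"
    by (rule comm_scalar_prod[where n = n]) (use Q x y in auto)
  finally show ?thesis using sym by simp
qed

lemma discr: fixes A B C :: real
  assumes h: "\<And>t. 0 \<le> A + 2 * B * t + C * t^2" shows "B^2 \<le> A * C"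
proof -
  have C: "C \<ge> 0"
  proof (rule ccontr)
    assume "\<not> C \<ge> 0"
    hence c: "C < 0" by simp
    define t where "t = sqrt ((\<bar>A\<bar> + 1) / (- C))"
    have nn: "0 \<le> (\<bar>A\<bar> + 1) / (- C)" using c by (intro divide_nonneg_pos) auto
    have "t^2 = (\<bar>A\<bar> + 1) / (- C)" unfolding t_def using nn by (rule real_sqrt_pow2)
    hence ct: "C * t^2 = - (\<bar>A\<bar> + 1)" using c by (simp add: field_simps)
    have "0 \<le> A + 2 * B * t + C * t^2" "0 \<le> A + 2 * B * (-t) + C * (-t)^2" using h by blast+
    hence "0 \<le> A + C * t^2" by simp
    thus False using ct by (simp add: abs_if split: if_splits)
  qed
  show ?thesis
  proof (cases "C = 0")
    case True
    have "B = 0"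
    proof (rule ccontr)
      assume b: "B \<noteq> 0"
      have "0 \<le> A + 2 * B * (- (\<bar>A\<bar> + 1) / (2 * B))" using h[of "- (\<bar>A\<bar> + 1) / (2 * B)"] True by simp
      also have "\<dots> = A - \<bar>A\<bar> - 1" using b by (simp add: field_simps)
      finally show False by (simp add: abs_if split: if_splits)
    qed
    thus ?thesis using True by simp
  next
    case False
    with C have C: "C > 0" by simp
    have "0 \<le> A + 2 * B * (- B / C) + C * (- B / C)^2" by (rule h)
    also have "\<dots> = A - B^2 / C" using C by (simp add: field_simps power2_eq_square)
    finally show ?thesis using C by (simp add: field_simps)
  qed
qed



locale gm =
  fixes Tm :: "real mat" and m n :: nat
  assumes Tm: "Tm \<in> carrier_mat m n" and npos: "0 < n"
begin

definition M where "M = transpose_mat Tm * Tm"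
definition lam where "lam = Sup {nsq (Tm *\<^sub>v x) | x. x \<in> carrier_vec n \<and> nsq x = 1}"
definition P where "P g = g \<cdot>\<^sub>m 1\<^sub>m n - M"
definition R where "R g = the (mat_inverse (P g))"

lemma M_carrier[simp]: "M \<in> carrier_mat n n" using Tm by (simp add: M_def)
lemma dim_M[simp]: "dim_row M = n" "dim_col M = n" using carrier_matD[OF M_carrier] by auto
lemma P_carrier[simp]: "P g \<in> carrier_mat n n" unfolding P_def by (rule minus_carrier_mat[OF M_carrier])
lemma dim_P[simp]: "dim_row (P g) = n" "dim_col (P g) = n" using carrier_matD[OF P_carrier] by auto
lemma Mv_carrier[simp]: "x \<in> carrier_vec n \<Longrightarrow> M *\<^sub>v x \<in> carrier_vec n" using M_carrier by (rule mult_mat_vec_carrier)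
lemma Pv_carrier[simp]: "x \<in> carrier_vec n \<Longrightarrow> P g *\<^sub>v x \<in> carrier_vec n" using P_carrier by (rule mult_mat_vec_carrier)

lemma M_sym: "transpose_mat M = M"
  using Tm by (simp add: M_def transpose_mult[of _ n m _ n])

lemma P_sym: "transpose_mat (P g) = P g"
proof (rule eq_matI)
  fix i j assume "i < dim_row (P g)" "j < dim_col (P g)"
  hence ij: "i < n" "j < n" by auto
  have "M $$ (j, i) = M $$ (i, j)" using arg_cong[OF M_sym, of "\<lambda>X. X $$ (i,j)"] ij by simp
  thus "transpose_mat (P g) $$ (i, j) = P g $$ (i, j)" using ij by (auto simp: P_def)
qed auto

lemma P_apply: assumes x: "x \<in> carrier_vec n" shows "P g *\<^sub>v x = g \<cdot>\<^sub>v x - M *\<^sub>v x"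
proof -
  have "P g *\<^sub>v x = (g \<cdot>\<^sub>m 1\<^sub>m n) *\<^sub>v x - M *\<^sub>v x" unfolding P_def
    by (rule minus_mult_distrib_mat_vec[OF _ _ x]) auto
  moreover have "(g \<cdot>\<^sub>m 1\<^sub>m n) *\<^sub>v x = g \<cdot>\<^sub>v x"
  proof (rule eq_vecI)
    fix i assume "i < dim_vec (g \<cdot>\<^sub>v x)"
    hence i: "i < n" using x by simp
    have "Matrix.row (g \<cdot>\<^sub>m 1\<^sub>m n) i = g \<cdot>\<^sub>v unit_vec n i"
      by (rule eq_vecI) (use i in auto)
    hence "((g \<cdot>\<^sub>m 1\<^sub>m n) *\<^sub>v x) $ i = g * scalar_prod (unit_vec n i) x"
      using i x by simp
    also have "\<dots> = g * x $ i" using i x by simp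
    finally show "((g \<cdot>\<^sub>m 1\<^sub>m n) *\<^sub>v x) $ i = (g \<cdot>\<^sub>v x) $ i" using i x by simp
  qed (use x in auto)
  ultimately show ?thesis by simp
qed

lemma quad_M: "x \<in> carrier_vec n \<Longrightarrow> scalar_prod x (M *\<^sub>v x) = nsq (Tm *\<^sub>v x)"
  unfolding M_def by (rule quad_transpose[OF Tm])

lemma quad_P: assumes x: "x \<in> carrier_vec n"
  shows "scalar_prod x (P g *\<^sub>v x) = g * nsq x - nsq (Tm *\<^sub>v x)"
proof -
  have "scalar_prod x (P g *\<^sub>v x) = scalar_prod x (g \<cdot>\<^sub>v x) - scalar_prod x (M *\<^sub>v x)"
    unfolding P_apply[OF x] by (rule scalar_prod_minus_distrib[of _ n]) (use x in auto)
  thus ?thesis using quad_M[OF x] x by (simp add: nsq_def)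
qed

definition S where "S = {nsq (Tm *\<^sub>v x) | x. x \<in> carrier_vec n \<and> nsq x = 1}"

lemma S_ne: "S \<noteq> {}"
proof -
  have "nsq (unit_vec n 0) = 1" using npos by (simp add: nsq_def)
  thus ?thesis unfolding S_def by (auto intro!: exI[of _ "unit_vec n 0"])
qed

lemma S_bdd: "bdd_above S"
proof -
  have "s \<le> fro Tm" if "s \<in> S" for s
  proof -
    from that obtain x where x: "x \<in> carrier_vec n" "nsq x = 1" "s = nsq (Tm *\<^sub>v x)" unfolding S_def by auto
    thus ?thesis using mat_vec_bound[OF Tm x(1)] by simp
  qed
  thus ?thesis by (auto simp: bdd_above_def)
qed

lemma lam_S: "lam = Sup S" unfolding lam_def S_def ..

lemma le_lam: "s \<in> S \<Longrightarrow> s \<le> lam" unfolding lam_S using S_bdd by (auto intro: cSup_upper)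

lemma lam_bound: assumes x: "x \<in> carrier_vec n" shows "nsq (Tm *\<^sub>v x) \<le> lam * nsq x"
proof (cases "nsq x = 0")
  case True
  hence "x = 0\<^sub>v n" using nsq_zero x by blast
  moreover have "Tm *\<^sub>v 0\<^sub>v n = 0\<^sub>v m" by (rule eq_vecI) (use Tm in auto)
  ultimately show ?thesis by (simp add: nsq_def)
next
  case False
  hence pos: "nsq x > 0" using nsq_nonneg[of x] by simp
  define c where "c = 1 / sqrt (nsq x)"
  have c2: "c^2 = 1 / nsq x" unfolding c_def using pos by (simp add: power_divide)
  have y: "c \<cdot>\<^sub>v x \<in> carrier_vec n" using x by simp
  have "nsq (c \<cdot>\<^sub>v x) = 1" using c2 pos by (simp add: nsq_smult)
  hence "nsq (Tm *\<^sub>v (c \<cdot>\<^sub>v x)) \<in> S" unfolding S_def using y by blast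
  hence "nsq (Tm *\<^sub>v (c \<cdot>\<^sub>v x)) \<le> lam" by (rule le_lam)
  moreover have "Tm *\<^sub>v (c \<cdot>\<^sub>v x) = c \<cdot>\<^sub>v (Tm *\<^sub>v x)" by (rule mult_mat_vec[OF Tm x])
  ultimately have "c^2 * nsq (Tm *\<^sub>v x) \<le> lam" by (simp add: nsq_smult)
  hence "nsq (Tm *\<^sub>v x) / nsq x \<le> lam" using c2 by simp
  thus ?thesis using pos by (simp add: field_simps)
qed

lemma lam_nonneg: "0 \<le> lam"
proof -
  obtain s where "s \<in> S" using S_ne by auto
  moreover have "0 \<le> s" using `s \<in> S` unfolding S_def by (auto simp: nsq_nonneg)
  ultimately show ?thesis using le_lam by fastforce
qed

lemma lam_pos: assumes nz: "Tm \<noteq> 0\<^sub>m m n" shows "0 < lam"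
proof -
  have "\<exists>i j. i < m \<and> j < n \<and> Tm $$ (i,j) \<noteq> 0"
  proof (rule ccontr)
    assume "\<nexists>i j. i < m \<and> j < n \<and> Tm $$ (i, j) \<noteq> 0"
    hence "Tm = 0\<^sub>m m n" using Tm by (intro eq_matI) auto
    thus False using nz by simp
  qed
  then obtain i j where ij: "i < m" "j < n" "Tm $$ (i,j) \<noteq> 0" by blast
  have e: "unit_vec n j \<in> carrier_vec n" "nsq (unit_vec n j) = 1" using ij by (auto simp: nsq_def)
  have "Tm *\<^sub>v unit_vec n j = col Tm j"
    by (rule eq_vecI) (use Tm ij in auto)
  hence "(Tm $$ (i,j))^2 \<le> nsq (Tm *\<^sub>v unit_vec n j)"
    using entry_bound[of "col Tm j" m i] Tm ij by auto
  moreover have "nsq (Tm *\<^sub>v unit_vec n j) \<le> lam" using e by (intro le_lam) (auto simp: S_def)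
  moreover have "0 < (Tm $$ (i,j))^2" using ij by simp
  ultimately show ?thesis by linarith
qed

lemma lam_approx: assumes "d > 0"
  shows "\<exists>u \<in> carrier_vec n. nsq u = 1 \<and> lam - d < nsq (Tm *\<^sub>v u)"
proof -
  have "lam - d < Sup S" using assms lam_S by simp
  then obtain s where "s \<in> S" "lam - d < s" using less_cSupE[OF _ S_ne] by blast
  thus ?thesis unfolding S_def by auto
qed

lemma P_pd: assumes g: "g > lam" and x: "x \<in> carrier_vec n"
  shows "(g - lam) * nsq x \<le> scalar_prod x (P g *\<^sub>v x)"
  using quad_P[OF x, of g] lam_bound[OF x] by (simp add: algebra_simps)

lemma P_psd: "g > lam \<Longrightarrow> x \<in> carrier_vec n \<Longrightarrow> 0 \<le> scalar_prod x (P g *\<^sub>v x)"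
proof -
  assume g: "g > lam" and x: "x \<in> carrier_vec n"
  have "0 \<le> (g - lam) * nsq x" using g nsq_nonneg[of x] by simp
  thus ?thesis using P_pd[OF g x] by linarith
qed

lemma R_props: assumes g: "g > lam"
  shows "R g \<in> carrier_mat n n \<and> P g * R g = 1\<^sub>m n \<and> R g * P g = 1\<^sub>m n"
proof -
  have "Determinant.det (P g) \<noteq> 0"
  proof
    assume "Determinant.det (P g) = 0"
    then obtain v where v: "v \<in> carrier_vec n" "v \<noteq> 0\<^sub>v n" "P g *\<^sub>v v = 0\<^sub>v n"
      using det_0_iff_vec_prod_zero[OF P_carrier] by blast
    have "(g - lam) * nsq v \<le> 0" using P_pd[OF g v(1)] v by simp
    hence "nsq v \<le> 0" using g by (simp add: mult_le_0_iff)
    hence "nsq v = 0" using nsq_nonneg[of v] by simp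
    thus False using nsq_zero[OF v(1)] v(2) by simp
  qed
  hence U: "P g \<in> Units (ring_mat TYPE(real) n ())" by (rule det_non_zero_imp_unit[OF P_carrier])
  show ?thesis
  proof (cases "mat_inverse (P g)")
    case None
    thus ?thesis using mat_inverse(1)[OF P_carrier None, of "()"] U by simp
  next
    case (Some B)
    thus ?thesis using mat_inverse(2)[OF P_carrier Some] unfolding R_def by simp
  qed
qed

lemma R_carrier: "g > lam \<Longrightarrow> R g \<in> carrier_mat n n" using R_props by blast

lemma PR_vec: assumes g: "g > lam" and y: "y \<in> carrier_vec n"
  shows "P g *\<^sub>v (R g *\<^sub>v y) = y"
proof -
  have "P g *\<^sub>v (R g *\<^sub>v y) = (P g * R g) *\<^sub>v y"
    by (rule assoc_mult_mat_vec[symmetric, of _ n n _ n]) (use R_props[OF g] y in auto)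
  thus ?thesis using R_props[OF g] y by simp
qed

lemma RP_vec: assumes g: "g > lam" and y: "y \<in> carrier_vec n"
  shows "R g *\<^sub>v (P g *\<^sub>v y) = y"
proof -
  have "R g *\<^sub>v (P g *\<^sub>v y) = (R g * P g) *\<^sub>v y"
    by (rule assoc_mult_mat_vec[symmetric, of _ n n _ n]) (use R_props[OF g] y in auto)
  thus ?thesis using R_props[OF g] y by simp
qed

lemma R_sym: assumes g: "g > lam" shows "transpose_mat (R g) = R g"
proof -
  have R: "R g \<in> carrier_mat n n" and PR: "P g * R g = 1\<^sub>m n" and RP: "R g * P g = 1\<^sub>m n"
    using R_props[OF g] by auto
  have "transpose_mat (R g) * P g = transpose_mat (transpose_mat (P g) * R g)"
    using R by (simp add: transpose_mult[of _ n n _ n])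
  also have "\<dots> = 1\<^sub>m n" using PR P_sym by simp
  finally have X: "transpose_mat (R g) * P g = 1\<^sub>m n" .
  have "transpose_mat (R g) = transpose_mat (R g) * (P g * R g)" using PR R by simp
  also have "\<dots> = (transpose_mat (R g) * P g) * R g" using R by (simp add: assoc_mult_mat[of _ n n _ n _ n])
  also have "\<dots> = R g" using X R by simp
  finally show ?thesis .
qed

lemma R_bound: assumes g: "g > lam" and y: "y \<in> carrier_vec n"
  shows "(g - lam)^2 * nsq (R g *\<^sub>v y) \<le> nsq y"
proof -
  define x where "x = R g *\<^sub>v y"
  have x: "x \<in> carrier_vec n" unfolding x_def using R_carrier[OF g] y by simp
  have Px: "P g *\<^sub>v x = y" unfolding x_def by (rule PR_vec[OF g y])
  have a: "(g - lam) * nsq x \<le> scalar_prod x y" using P_pd[OF g x] Px by simp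
  have b: "(scalar_prod x y)^2 \<le> nsq x * nsq y" by (rule cs_vec[OF x y])
  have c: "0 \<le> (g - lam) * nsq x" using g nsq_nonneg[of x] by simp
  have "((g - lam) * nsq x)^2 \<le> (scalar_prod x y)^2" using a c by (intro power_mono) auto
  hence "(g - lam)^2 * nsq x * nsq x \<le> nsq x * nsq y" using b by (simp add: power2_eq_square algebra_simps)
  hence "nsq x * ((g - lam)^2 * nsq x) \<le> nsq x * nsq y" by (simp add: algebra_simps)
  thus ?thesis
    using nsq_nonneg[of x] unfolding x_def[symmetric]
    by (cases "nsq x = 0") (simp_all add: nsq_nonneg mult_le_cancel_left)
qed

lemma resolvent: assumes g: "g > lam" and h: "h > lam" and c: "c \<in> carrier_vec n"
  shows "R g *\<^sub>v c - R h *\<^sub>v c = (h - g) \<cdot>\<^sub>v (R g *\<^sub>v (R h *\<^sub>v c))"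
proof -
  define w where "w = R h *\<^sub>v c"
  have w: "w \<in> carrier_vec n" unfolding w_def using R_carrier[OF h] c by simp
  have Rg: "R g \<in> carrier_mat n n" by (rule R_carrier[OF g])
  have 1: "R g *\<^sub>v c = R g *\<^sub>v (P h *\<^sub>v w)" unfolding w_def using PR_vec[OF h c] by simp
  have 2: "w = R g *\<^sub>v (P g *\<^sub>v w)" using RP_vec[OF g w] by simp
  have "R g *\<^sub>v c - w = R g *\<^sub>v (P h *\<^sub>v w) - R g *\<^sub>v (P g *\<^sub>v w)" using 1 2 by simp
  also have "\<dots> = R g *\<^sub>v (P h *\<^sub>v w - P g *\<^sub>v w)"
    by (rule mult_minus_distrib_mat_vec[OF Rg, symmetric]) (use w in auto)
  also have "P h *\<^sub>v w - P g *\<^sub>v w = (h - g) \<cdot>\<^sub>v w"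
    unfolding P_apply[OF w] by (rule eq_vecI) (use w Mv_carrier[OF w] in \<open>auto simp: algebra_simps\<close>)
  also have "R g *\<^sub>v ((h - g) \<cdot>\<^sub>v w) = (h - g) \<cdot>\<^sub>v (R g *\<^sub>v w)" by (rule mult_mat_vec[OF Rg w])
  finally show ?thesis unfolding w_def .
qed

definition F where "F g = fro (R g * M)"

lemma F_cols: assumes g: "g > lam" shows "F g = (\<Sum>j<n. nsq (R g *\<^sub>v col M j))"
proof -
  have "R g * M \<in> carrier_mat n n" using R_carrier[OF g] by simp
  hence "F g = (\<Sum>j<n. nsq (col (R g * M) j))" unfolding F_def by (rule fro_cols)
  also have "\<dots> = (\<Sum>j<n. nsq (R g *\<^sub>v col M j))"
    by (rule sum.cong) (use R_carrier[OF g] M_carrier in \<open>auto simp: col_mult2[OF R_carrier[OF g] M_carrier]\<close>)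
  finally show ?thesis .
qed

lemma F_upper: assumes g: "g > lam" shows "(g - lam)^2 * F g \<le> fro M"
proof -
  have "(g - lam)^2 * F g = (\<Sum>j<n. (g - lam)^2 * nsq (R g *\<^sub>v col M j))"
    by (simp add: F_cols[OF g] sum_distrib_left)
  also have "\<dots> \<le> (\<Sum>j<n. nsq (col M j))"
    by (rule sum_mono, rule R_bound[OF g]) auto
  also have "\<dots> = fro M" by (rule fro_cols[symmetric]) (rule M_carrier)
  finally show ?thesis .
qed

lemma RM_eq: assumes g: "g > lam" shows "R g * M = g \<cdot>\<^sub>m R g - 1\<^sub>m n"
proof -
  have R: "R g \<in> carrier_mat n n" and RP: "R g * P g = 1\<^sub>m n" using R_props[OF g] by auto
  have Meq: "M = g \<cdot>\<^sub>m 1\<^sub>m n - P g" unfolding P_def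
    by (rule eq_matI) auto
  have "R g * M = R g * (g \<cdot>\<^sub>m 1\<^sub>m n) - R g * P g"
    unfolding Meq by (rule mult_minus_distrib_mat[OF R]) auto
  also have "R g * (g \<cdot>\<^sub>m 1\<^sub>m n) = g \<cdot>\<^sub>m R g" using R by (subst mult_smult_distrib[of _ n n]) auto
  finally show ?thesis using RP by simp
qed

lemma F_lower: assumes g: "g > lam" and u: "u \<in> carrier_vec n" "nsq u = 1"
  shows "(g * scalar_prod u (R g *\<^sub>v u) - 1)^2 \<le> F g"
proof -
  have R: "R g \<in> carrier_mat n n" by (rule R_carrier[OF g])
  define v where "v = (R g * M) *\<^sub>v u"
  have v: "v \<in> carrier_vec n" unfolding v_def using mult_carrier_mat[OF R M_carrier] u by simp
  have "nsq v \<le> F g" using mat_vec_bound[of "R g * M" n n u] R u unfolding F_def v_def by (simp add: mult_carrier_mat[OF R M_carrier])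
  have veq: "v = g \<cdot>\<^sub>v (R g *\<^sub>v u) - u"
  proof -
    have "v = (g \<cdot>\<^sub>m R g - 1\<^sub>m n) *\<^sub>v u" unfolding v_def RM_eq[OF g] ..
    also have "\<dots> = (g \<cdot>\<^sub>m R g) *\<^sub>v u - 1\<^sub>m n *\<^sub>v u"
      by (rule minus_mult_distrib_mat_vec) (use R u in auto)
    also have "(g \<cdot>\<^sub>m R g) *\<^sub>v u = g \<cdot>\<^sub>v (R g *\<^sub>v u)"
      by (rule eq_vecI) (use R u in \<open>auto simp: scalar_prod_def sum_distrib_left algebra_simps\<close>)
    finally show ?thesis using u by simp
  qed
  have "scalar_prod v u = g * scalar_prod (R g *\<^sub>v u) u - scalar_prod u u"
    unfolding veq by (subst minus_scalar_prod_distrib[of _ n]) (use R u in auto)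
  also have "scalar_prod (R g *\<^sub>v u) u = scalar_prod u (R g *\<^sub>v u)"
    by (rule comm_scalar_prod[where n = n]) (use R u in auto)
  finally have "scalar_prod v u = g * scalar_prod u (R g *\<^sub>v u) - 1" using u by (simp add: nsq_def)
  moreover have "(scalar_prod v u)^2 \<le> nsq v * nsq u" by (rule cs_vec[OF v u(1)])
  ultimately show ?thesis using `nsq v \<le> F g` u by simp
qed

lemma pcs: assumes g: "g > lam" and a: "a \<in> carrier_vec n" and b: "b \<in> carrier_vec n"
  shows "(scalar_prod a (P g *\<^sub>v b))^2 \<le> scalar_prod a (P g *\<^sub>v a) * scalar_prod b (P g *\<^sub>v b)"
proof (rule discr)
  fix t :: real
  have ab: "a + t \<cdot>\<^sub>v b \<in> carrier_vec n" using a b by simp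
  have Pa: "P g *\<^sub>v a \<in> carrier_vec n" and Pb: "P g *\<^sub>v b \<in> carrier_vec n" using a b by auto
  have e: "P g *\<^sub>v (a + t \<cdot>\<^sub>v b) = P g *\<^sub>v a + t \<cdot>\<^sub>v (P g *\<^sub>v b)"
    using a b by (simp add: mult_add_distrib_mat_vec[of _ n n] mult_mat_vec[of _ n n])
  have s: "scalar_prod b (P g *\<^sub>v a) = scalar_prod a (P g *\<^sub>v b)"
    by (rule sym_form[OF P_carrier P_sym b a])
  have "0 \<le> scalar_prod (a + t \<cdot>\<^sub>v b) (P g *\<^sub>v (a + t \<cdot>\<^sub>v b))" by (rule P_psd[OF g ab])
  also have "\<dots> = scalar_prod a (P g *\<^sub>v a) + 2 * scalar_prod a (P g *\<^sub>v b) * t + scalar_prod b (P g *\<^sub>v b) * t^2"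
    unfolding e using a b Pa Pb s
    by (simp add: add_scalar_prod_distrib[of _ n] scalar_prod_add_distrib[of _ n] power2_eq_square algebra_simps)
  finally show "0 \<le> scalar_prod a (P g *\<^sub>v a) + 2 * scalar_prod a (P g *\<^sub>v b) * t + scalar_prod b (P g *\<^sub>v b) * t^2" .
qed

lemma uRu: assumes g: "g > lam" and u: "u \<in> carrier_vec n" "nsq u = 1"
  shows "1 \<le> scalar_prod u (P g *\<^sub>v u) * scalar_prod u (R g *\<^sub>v u)"
proof -
  have R: "R g \<in> carrier_mat n n" by (rule R_carrier[OF g])
  have b: "R g *\<^sub>v u \<in> carrier_vec n" using R u by simp
  have 1: "scalar_prod u (P g *\<^sub>v (R g *\<^sub>v u)) = 1" using PR_vec[OF g u(1)] u by (simp add: nsq_def)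
  have 2: "scalar_prod (R g *\<^sub>v u) (P g *\<^sub>v (R g *\<^sub>v u)) = scalar_prod u (R g *\<^sub>v u)"
    using PR_vec[OF g u(1)] by (simp add: comm_scalar_prod[OF b u(1)])
  show ?thesis using pcs[OF g u(1) b] 1 2 by simp
qed

end



context gm begin

lemma dim_R[simp]: "g > lam \<Longrightarrow> dim_row (R g) = n" "g > lam \<Longrightarrow> dim_col (R g) = n"
  using carrier_matD[OF R_carrier] by auto

lemma R_bound2: assumes a: "lam < a" and g: "a \<le> g" and y: "y \<in> carrier_vec n"
  shows "nsq (R g *\<^sub>v y) \<le> nsq y / (a - lam)^2"
proof -
  have g': "g > lam" using a g by simp
  have "(a - lam)^2 \<le> (g - lam)^2" using a g by (intro power_mono) auto
  hence "(a - lam)^2 * nsq (R g *\<^sub>v y) \<le> (g - lam)^2 * nsq (R g *\<^sub>v y)"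
    by (intro mult_right_mono) (auto simp: nsq_nonneg)
  also have "\<dots> \<le> nsq y" by (rule R_bound[OF g' y])
  finally show ?thesis using a by (simp add: field_simps)
qed

lemma abs_entry: assumes "v \<in> carrier_vec n" "i < n" shows "\<bar>v $ i\<bar> \<le> sqrt (nsq v)"
  using real_sqrt_le_mono[OF entry_bound[OF assms]] by simp

lemma comp_lip: assumes a: "lam < a" and c: "c \<in> carrier_vec n" and i: "i < n"
  shows "(sqrt (nsq c) / (a - lam)^2)-lipschitz_on {a..b} (\<lambda>g. (R g *\<^sub>v c) $ i)"
proof (rule lipschitz_onI)
  show "0 \<le> sqrt (nsq c) / (a - lam)^2" by (simp add: nsq_nonneg)
next
  fix g h assume gh: "g \<in> {a..b}" "h \<in> {a..b}"
  have g: "g > lam" "a \<le> g" and h: "h > lam" "a \<le> h" using gh a by auto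
  have Rh: "R h *\<^sub>v c \<in> carrier_vec n" using R_carrier[OF h(1)] c by simp
  have Rg: "R g *\<^sub>v (R h *\<^sub>v c) \<in> carrier_vec n" using R_carrier[OF g(1)] Rh by simp
  have Rgc: "R g *\<^sub>v c \<in> carrier_vec n" using R_carrier[OF g(1)] c by simp
  have "(R g *\<^sub>v c) $ i - (R h *\<^sub>v c) $ i = (R g *\<^sub>v c - R h *\<^sub>v c) $ i"
    using i g h by simp
  also have "\<dots> = (h - g) * (R g *\<^sub>v (R h *\<^sub>v c)) $ i"
    unfolding resolvent[OF g(1) h(1) c] using i g h by simp
  finally have eq: "dist ((R g *\<^sub>v c) $ i) ((R h *\<^sub>v c) $ i) = \<bar>h - g\<bar> * \<bar>(R g *\<^sub>v (R h *\<^sub>v c)) $ i\<bar>"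
    by (simp add: dist_real_def abs_mult)
  have "nsq (R g *\<^sub>v (R h *\<^sub>v c)) \<le> nsq (R h *\<^sub>v c) / (a - lam)^2" by (rule R_bound2[OF a g(2) Rh])
  also have "\<dots> \<le> (nsq c / (a - lam)^2) / (a - lam)^2"
    by (intro divide_right_mono R_bound2[OF a h(2) c]) auto
  also have "\<dots> = (sqrt (nsq c) / (a - lam)^2)^2"
    using a by (simp add: power_divide nsq_nonneg power2_eq_square)
  finally have "sqrt (nsq (R g *\<^sub>v (R h *\<^sub>v c))) \<le> sqrt (nsq c) / (a - lam)^2"
    using real_sqrt_le_mono by (metis abs_of_nonneg divide_nonneg_nonneg nsq_nonneg real_sqrt_abs real_sqrt_ge_zero zero_le_power2)
  hence "\<bar>(R g *\<^sub>v (R h *\<^sub>v c)) $ i\<bar> \<le> sqrt (nsq c) / (a - lam)^2"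
    using abs_entry[OF Rg i] by linarith
  hence "\<bar>h - g\<bar> * \<bar>(R g *\<^sub>v (R h *\<^sub>v c)) $ i\<bar> \<le> \<bar>h - g\<bar> * (sqrt (nsq c) / (a - lam)^2)"
    by (intro mult_left_mono) auto
  show "dist ((R g *\<^sub>v c) $ i) ((R h *\<^sub>v c) $ i) \<le> sqrt (nsq c) / (a - lam)^2 * dist g h"
  proof -
    have "\<bar>h - g\<bar> * (sqrt (nsq c) / (a - lam)^2) = sqrt (nsq c) / (a - lam)^2 * dist g h"
      by (simp add: dist_real_def abs_minus_commute)
    thus ?thesis unfolding eq using \<open>\<bar>h - g\<bar> * \<bar>(R g *\<^sub>v (R h *\<^sub>v c)) $ i\<bar> \<le> _\<close> by linarith
  qed
qed

lemma F_cont: assumes a: "lam < a" shows "continuous_on {a..b} F"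
proof -
  have eq: "F g = (\<Sum>j<n. \<Sum>i<n. ((R g *\<^sub>v col M j) $ i)^2)" if "g \<in> {a..b}" for g
  proof -
    have g: "g > lam" using that a by auto
    show ?thesis unfolding F_cols[OF g]
      by (rule sum.cong[OF refl], rule nsq_sum) (use R_carrier[OF g] in auto)
  qed
  have ce: "continuous_on {a..b} F = continuous_on {a..b} (\<lambda>g. \<Sum>j<n. \<Sum>i<n. ((R g *\<^sub>v col M j) $ i)^2)"
    by (rule continuous_on_cong[OF refl eq])
  have "continuous_on {a..b} (\<lambda>g. \<Sum>j<n. \<Sum>i<n. ((R g *\<^sub>v col M j) $ i)^2)"
  proof (intro continuous_on_sum continuous_on_power)
    fix i j assume "i \<in> {..<n}" "j \<in> {..<n}"
    hence "col M j \<in> carrier_vec n" "i < n" by auto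
    from lipschitz_on_continuous_on[OF comp_lip[OF a this]]
    show "continuous_on {a..b} (\<lambda>g. (R g *\<^sub>v col M j) $ i)" .
  qed
  thus ?thesis using ce by simp
qed

lemma exists_gamma: assumes nz: "Tm \<noteq> 0\<^sub>m m n" and rho: "\<rho> > 0"
  shows "\<exists>g > lam. F g = \<rho>^2"
proof -
  have lp: "lam > 0" by (rule lam_pos[OF nz])
  define d where "d = lam / (2 * (\<rho> + 1))"
  have d: "d > 0" unfolding d_def using lp rho by simp
  define g1 where "g1 = lam + d"
  have g1: "g1 > lam" unfolding g1_def using d by simp
  obtain u where u: "u \<in> carrier_vec n" "nsq u = 1" "lam - d < nsq (Tm *\<^sub>v u)"
    using lam_approx[OF d] by blast
  have uPu: "scalar_prod u (P g1 *\<^sub>v u) = g1 - nsq (Tm *\<^sub>v u)" using quad_P[OF u(1)] u(2) by simp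
  have uPu1: "scalar_prod u (P g1 *\<^sub>v u) < 2 * d" using uPu u(3) unfolding g1_def by simp
  have uPu2: "scalar_prod u (P g1 *\<^sub>v u) \<ge> d" using P_pd[OF g1 u(1)] u(2) unfolding g1_def by simp
  have one: "1 \<le> scalar_prod u (P g1 *\<^sub>v u) * scalar_prod u (R g1 *\<^sub>v u)" by (rule uRu[OF g1 u(1,2)])
  have uRu_pos: "scalar_prod u (R g1 *\<^sub>v u) > 0"
    using one uPu2 d by (smt (verit, best) mult_nonpos_nonneg mult_nonneg_nonpos)
  have "1 \<le> 2 * d * scalar_prod u (R g1 *\<^sub>v u)"
    using one uPu1 uRu_pos by (smt (verit) mult_strict_right_mono)
  hence "lam / (2 * d) \<le> lam * scalar_prod u (R g1 *\<^sub>v u)"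
    using d lp by (simp add: field_simps)
  moreover have "lam / (2 * d) = \<rho> + 1" unfolding d_def using lp rho by (simp add: field_simps)
  moreover have "lam * scalar_prod u (R g1 *\<^sub>v u) < g1 * scalar_prod u (R g1 *\<^sub>v u)"
    using g1 uRu_pos by simp
  ultimately have big: "g1 * scalar_prod u (R g1 *\<^sub>v u) - 1 > \<rho>" by simp
  have "\<rho>^2 < (g1 * scalar_prod u (R g1 *\<^sub>v u) - 1)^2"
    using big rho by (intro power_strict_mono) auto
  also have "\<dots> \<le> F g1" by (rule F_lower[OF g1 u(1,2)])
  finally have F1: "\<rho>^2 \<le> F g1" by simp
  define g2 where "g2 = g1 + sqrt (fro M) / \<rho>"
  have g12: "g1 \<le> g2" unfolding g2_def using rho by (simp add: fro_nonneg)
  have g2: "g2 > lam" using g1 g12 by simp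
  have "(g2 - lam)^2 * F g2 \<le> fro M" by (rule F_upper[OF g2])
  also have "fro M = \<rho>^2 * (sqrt (fro M) / \<rho>)^2" using rho by (simp add: power_divide fro_nonneg)
  also have "\<dots> \<le> \<rho>^2 * (g2 - lam)^2"
    using rho g1 unfolding g2_def by (intro mult_left_mono power_mono) (auto simp: fro_nonneg)
  finally have "(g2 - lam)^2 * F g2 \<le> (g2 - lam)^2 * \<rho>^2" by (simp add: mult.commute)
  hence F2: "F g2 \<le> \<rho>^2" using g2 by (simp add: mult_le_cancel_left)
  obtain g where "g1 \<le> g" "g \<le> g2" "F g = \<rho>^2"
    using IVT2'[of F g2 "\<rho>^2" g1, OF F2 F1 g12 F_cont[OF g1]] by blast
  thus ?thesis using g1 by (intro exI[of _ g]) auto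
qed

end



definition quadf :: "real mat \<Rightarrow> nat \<Rightarrow> (nat \<Rightarrow> real) \<Rightarrow> real" where
  "quadf X N xi = scalar_prod (X *\<^sub>v Matrix.vec N xi) (X *\<^sub>v Matrix.vec N xi)"

lemma quadf_nonneg: "0 \<le> quadf X N xi"
  using nsq_nonneg unfolding quadf_def nsq_def by blast

lemma quadf_sum: assumes X: "X \<in> carrier_mat m N"
  shows "quadf X N xi = (\<Sum>r<m. (\<Sum>c<N. X $$ (r,c) * xi c)^2)"
proof -
  have "quadf X N xi = nsq (X *\<^sub>v Matrix.vec N xi)" by (simp add: quadf_def nsq_def)
  also have "\<dots> = (\<Sum>r<m. ((X *\<^sub>v Matrix.vec N xi) $ r)^2)" by (rule nsq_sum) (use X in auto)
  also have "\<dots> = (\<Sum>r<m. (\<Sum>c<N. X $$ (r,c) * xi c)^2)"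
    by (rule sum.cong) (use X in \<open>auto simp: scalar_prod_def atLeast0LessThan\<close>)
  finally show ?thesis .
qed

lemma fro_sum: assumes X: "X \<in> carrier_mat m N"
  shows "fro X = (\<Sum>r<m. \<Sum>c<N. (X $$ (r,c))^2)"
  using X by (simp add: fro_def)

lemma comp_meas: "i < N \<Longrightarrow> (\<lambda>x. x i) \<in> borel_measurable (RN N)"
  unfolding RN_def by (rule measurable_component_singleton) auto

lemma lin_meas: "(\<lambda>x. \<Sum>c<N. a c * x c) \<in> borel_measurable (RN N)"
  by (intro borel_measurable_sum borel_measurable_times borel_measurable_const comp_meas) auto

lemma quadf_meas: assumes X: "X \<in> carrier_mat m N"
  shows "quadf X N \<in> borel_measurable (RN N)"
proof -
  have "quadf X N = (\<lambda>xi. \<Sum>r<m. (\<Sum>c<N. X $$ (r,c) * xi c)^2)" using quadf_sum[OF X] by (intro ext)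
  moreover have "(\<lambda>xi. \<Sum>r<m. (\<Sum>c<N. X $$ (r,c) * xi c)^2) \<in> borel_measurable (RN N)"
    by (intro borel_measurable_sum borel_measurable_power lin_meas)
  ultimately show ?thesis by simp
qed

lemma sqnorm_meas: "sqnorm N \<in> borel_measurable (RN N)"
  unfolding sqnorm_def by (intro borel_measurable_sum borel_measurable_power comp_meas) auto

lemma cost_meas: "(\<lambda>z. sqnorm N (\<lambda>i. fst z i - snd z i)) \<in> borel_measurable (RN N \<Otimes>\<^sub>M RN N)"
  unfolding sqnorm_def
  by (intro borel_measurable_sum borel_measurable_power borel_measurable_diff
        measurable_compose[OF measurable_fst comp_meas] measurable_compose[OF measurable_snd comp_meas]) auto

lemma sqnorm_nonneg: "0 \<le> sqnorm N x" unfolding sqnorm_def by (auto intro!: sum_nonneg)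

locale idcov =
  fixes P0 :: "(nat \<Rightarrow> real) measure" and N :: nat
  assumes P0: "P0 \<in> distrs2 N"
    and cov: "\<forall>i < N. \<forall>j < N. (\<integral>xi. xi i * xi j \<partial>P0) = (if i = j then 1 else 0)"
begin

lemma prob: "prob_space P0" and sets_P0: "sets P0 = sets (RN N)"
  and fin: "(\<integral>\<^sup>+ x. ennreal (sqnorm N x) \<partial>P0) < \<infinity>"
  using P0 unfolding distrs2_def by auto

lemma meas_P0: "f \<in> borel_measurable (RN N) \<Longrightarrow> f \<in> borel_measurable P0"
  using measurable_cong_sets[OF sets_P0 refl] by blast

lemma int_prod: assumes i: "i < N" and j: "j < N"
  shows "integrable P0 (\<lambda>x. x i * x j)"
proof (rule integrableI_bounded)
  show "(\<lambda>x. x i * x j) \<in> borel_measurable P0"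
    by (intro meas_P0 borel_measurable_times comp_meas i j)
  have "(\<integral>\<^sup>+ x. ennreal (norm (x i * x j)) \<partial>P0) \<le> (\<integral>\<^sup>+ x. ennreal (2 * sqnorm N x) \<partial>P0)"
  proof (rule nn_integral_mono)
    fix x :: "nat \<Rightarrow> real"
    have a: "(x i)^2 \<le> sqnorm N x" unfolding sqnorm_def
      by (rule member_le_sum[of i "{..<N}" "\<lambda>k. (x k)^2"]) (use i in auto)
    have b: "(x j)^2 \<le> sqnorm N x" unfolding sqnorm_def
      by (rule member_le_sum[of j "{..<N}" "\<lambda>k. (x k)^2"]) (use j in auto)
    have h: "0 \<le> (\<bar>x i\<bar> - \<bar>x j\<bar>)^2" by simp
    have h2: "(\<bar>x i\<bar> - \<bar>x j\<bar>)^2 = (x i)^2 + (x j)^2 - 2 * (\<bar>x i\<bar> * \<bar>x j\<bar>)"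
      by (simp add: power2_eq_square algebra_simps)
    have h3: "0 \<le> \<bar>x i\<bar> * \<bar>x j\<bar>" by simp
    have "\<bar>x i * x j\<bar> \<le> (x i)^2 + (x j)^2"
      using h h2 h3 unfolding abs_mult by linarith
    thus "ennreal (norm (x i * x j)) \<le> ennreal (2 * sqnorm N x)"
      using a b by (intro ennreal_leI) simp
  qed
  also have "\<dots> = 2 * (\<integral>\<^sup>+ x. ennreal (sqnorm N x) \<partial>P0)"
    by (subst ennreal_mult) (auto intro!: nn_integral_cmult meas_P0 sqnorm_meas simp: sqnorm_nonneg)
  also have "\<dots> < \<infinity>" using fin by (simp add: ennreal_mult_less_top)
  finally show "(\<integral>\<^sup>+ x. ennreal (norm (x i * x j)) \<partial>P0) < \<infinity>" .
qed

lemma int_lin2: "integrable P0 (\<lambda>x. (\<Sum>c<N. a c * x c)^2) \<and>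
   (\<integral>x. (\<Sum>c<N. a c * x c)^2 \<partial>P0) = (\<Sum>c<N. (a c)^2)"
proof -
  have eq: "(\<Sum>c<N. a c * x c)^2 = (\<Sum>c<N. \<Sum>d<N. (a c * a d) * (x c * x d))" for x :: "nat \<Rightarrow> real"
    by (simp add: power2_eq_square sum_product algebra_simps)
  have ii: "integrable P0 (\<lambda>x. (\<Sum>c<N. \<Sum>d<N. (a c * a d) * (x c * x d)))"
    by (intro Bochner_Integration.integrable_sum integrable_mult_right int_prod) auto
  have ic: "integrable P0 (\<lambda>x. \<Sum>d<N. (a c * a d) * (x c * x d))" if "c \<in> {..<N}" for c
    by (rule Bochner_Integration.integrable_sum, rule integrable_mult_right, rule int_prod) (use that in auto)
  have icd: "integrable P0 (\<lambda>x. (a c * a d) * (x c * x d))" if "c \<in> {..<N}" "d \<in> {..<N}" for c d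
    by (rule integrable_mult_right, rule int_prod) (use that in auto)
  have "(\<integral>x. (\<Sum>c<N. \<Sum>d<N. (a c * a d) * (x c * x d)) \<partial>P0)
      = (\<Sum>c<N. \<integral>x. (\<Sum>d<N. (a c * a d) * (x c * x d)) \<partial>P0)"
    by (rule Bochner_Integration.integral_sum[OF ic])
  also have "\<dots> = (\<Sum>c<N. \<Sum>d<N. \<integral>x. (a c * a d) * (x c * x d) \<partial>P0)"
    by (intro sum.cong refl Bochner_Integration.integral_sum icd) auto
  also have "\<dots> = (\<Sum>c<N. \<Sum>d<N. (a c * a d) * (\<integral>x. x c * x d \<partial>P0))" by simp
  also have "\<dots> = (\<Sum>c<N. \<Sum>d<N. (if c = d then a c * a d else 0))"
    using cov by (intro sum.cong refl) auto
  also have "\<dots> = (\<Sum>c<N. (a c)^2)" by (simp add: power2_eq_square)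
  finally show ?thesis using ii unfolding eq by simp
qed

lemma int_quadf: assumes X: "X \<in> carrier_mat m N"
  shows "integrable P0 (quadf X N) \<and> integral\<^sup>L P0 (quadf X N) = fro X"
proof -
  have e: "quadf X N = (\<lambda>xi. \<Sum>r<m. (\<Sum>c<N. X $$ (r,c) * xi c)^2)" using quadf_sum[OF X] by (intro ext)
  have "integrable P0 (\<lambda>xi. \<Sum>r<m. (\<Sum>c<N. X $$ (r,c) * xi c)^2)"
    using int_lin2 by (intro Bochner_Integration.integrable_sum) auto
  moreover have "(\<integral>xi. (\<Sum>r<m. (\<Sum>c<N. X $$ (r,c) * xi c)^2) \<partial>P0) = fro X"
    using int_lin2 by (subst Bochner_Integration.integral_sum) (auto simp: fro_sum[OF X])
  ultimately show ?thesis unfolding e by simp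
qed

lemma nn_quadf: assumes X: "X \<in> carrier_mat m N"
  shows "(\<integral>\<^sup>+ xi. ennreal (quadf X N xi) \<partial>P0) = ennreal (fro X)"
  using int_quadf[OF X] quadf_nonneg by (subst nn_integral_eq_integral) auto

end



lemma enn_meas: "f \<in> borel_measurable M \<Longrightarrow> (\<lambda>x. ennreal (f x)) \<in> borel_measurable M"
  by (rule measurable_compose[OF _ measurable_ennreal])

lemma sqnorm_vec: "sqnorm N x = nsq (Matrix.vec N x)"
  by (simp add: sqnorm_def nsq_sum[of _ N])

context idcov begin

lemma ub:
  assumes P: "P \<in> wball N P0 \<rho>" and fm: "f \<in> borel_measurable (RN N)" and qm: "q \<in> borel_measurable (RN N)"
    and a: "0 \<le> a" and qn: "\<And>y. 0 \<le> q y"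
    and pw: "\<And>x y. f x \<le> a * sqnorm N (\<lambda>i. x i - y i) + q y"
  shows "(\<integral>\<^sup>+x. ennreal (f x) \<partial>P) \<le> ennreal (a * \<rho>^2) + (\<integral>\<^sup>+y. ennreal (q y) \<partial>P0)"
proof -
  let ?cost = "\<lambda>z. sqnorm N (\<lambda>i. fst z i - snd z i)"
  let ?X = "\<integral>\<^sup>+x. ennreal (f x) \<partial>P"
  let ?Q = "\<integral>\<^sup>+y. ennreal (q y) \<partial>P0"
  have W: "wasserstein2_sq N P P0 \<le> ennreal (\<rho>^2)" using P unfolding wball_def by auto
  have key: "?X \<le> ennreal a * (\<integral>\<^sup>+z. ennreal (?cost z) \<partial>C) + ?Q" if C: "C \<in> couplings N P P0" for C
  proof -
    have sC: "sets C = sets (RN N \<Otimes>\<^sub>M RN N)" and dfst: "distr C (RN N) fst = P"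
      and dsnd: "distr C (RN N) snd = P0" using C unfolding couplings_def by auto
    have mfst: "fst \<in> measurable C (RN N)"
      using measurable_fst measurable_cong_sets[OF sC refl] by blast
    have msnd: "snd \<in> measurable C (RN N)"
      using measurable_snd measurable_cong_sets[OF sC refl] by blast
    have mC: "g \<in> borel_measurable C" if "g \<in> borel_measurable (RN N \<Otimes>\<^sub>M RN N)" for g
      using that measurable_cong_sets[OF sC refl] by blast
    have "?X = (\<integral>\<^sup>+x. ennreal (f x) \<partial>distr C (RN N) fst)" using dfst by simp
    also have "\<dots> = (\<integral>\<^sup>+z. ennreal (f (fst z)) \<partial>C)"
      by (rule nn_integral_distr[OF mfst]) (use enn_meas[OF fm] in simp)
    also have "\<dots> \<le> (\<integral>\<^sup>+z. ennreal (a * ?cost z) + ennreal (q (snd z)) \<partial>C)"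
    proof (rule nn_integral_mono)
      fix z
      have "ennreal (f (fst z)) \<le> ennreal (a * ?cost z + q (snd z))" using pw by (rule ennreal_leI)
      also have "\<dots> = ennreal (a * ?cost z) + ennreal (q (snd z))"
        using a qn sqnorm_nonneg by (simp add: ennreal_plus)
      finally show "ennreal (f (fst z)) \<le> ennreal (a * ?cost z) + ennreal (q (snd z))" .
    qed
    also have "\<dots> = (\<integral>\<^sup>+z. ennreal (a * ?cost z) \<partial>C) + (\<integral>\<^sup>+z. ennreal (q (snd z)) \<partial>C)"
      by (rule nn_integral_add; rule enn_meas) (auto intro!: mC borel_measurable_times cost_meas measurable_compose[OF msnd qm])
    also have "(\<integral>\<^sup>+z. ennreal (a * ?cost z) \<partial>C) = (\<integral>\<^sup>+z. ennreal a * ennreal (?cost z) \<partial>C)"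
      using a sqnorm_nonneg by (simp add: ennreal_mult)
    also have "\<dots> = ennreal a * (\<integral>\<^sup>+z. ennreal (?cost z) \<partial>C)"
      by (rule nn_integral_cmult, rule enn_meas, rule mC, rule cost_meas)
    also have "(\<integral>\<^sup>+z. ennreal (q (snd z)) \<partial>C) = (\<integral>\<^sup>+y. ennreal (q y) \<partial>distr C (RN N) snd)"
      by (rule nn_integral_distr[OF msnd, symmetric]) (use enn_meas[OF qm] in simp)
    also have "\<dots> = ?Q" using dsnd by simp
    finally show ?thesis .
  qed
  show ?thesis
  proof (rule ennreal_le_epsilon)
    fix e :: real assume e: "0 < e"
    define e' where "e' = e / (a + 1)"
    have e': "0 < e'" unfolding e'_def using e a by simp
    have ae: "a * e' \<le> e" unfolding e'_def using e a by (simp add: field_simps)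
    have fin: "wasserstein2_sq N P P0 \<noteq> \<infinity>" 
    proof
      assume "wasserstein2_sq N P P0 = \<infinity>"
      with W have "\<top> \<le> ennreal (\<rho>^2)" by simp
      thus False using top_unique ennreal_neq_top by metis
    qed
    obtain C where C: "C \<in> couplings N P P0"
      and lt: "(\<integral>\<^sup>+z. ennreal (?cost z) \<partial>C) < wasserstein2_sq N P P0 + e'"
      using INF_approx_ennreal[OF e' wasserstein2_sq_def fin] by blast
    have "(\<integral>\<^sup>+z. ennreal (?cost z) \<partial>C) \<le> ennreal (\<rho>^2) + ennreal e'"
      using lt W by (meson add_right_mono less_imp_le order_trans)
    also have "\<dots> = ennreal (\<rho>^2 + e')" using e' by (simp add: ennreal_plus)
    finally have c: "(\<integral>\<^sup>+z. ennreal (?cost z) \<partial>C) \<le> ennreal (\<rho>^2 + e')" .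
    have "?X \<le> ennreal a * (\<integral>\<^sup>+z. ennreal (?cost z) \<partial>C) + ?Q" by (rule key[OF C])
    also have "\<dots> \<le> ennreal a * ennreal (\<rho>^2 + e') + ?Q" by (intro add_mono mult_left_mono c) auto
    also have "ennreal a * ennreal (\<rho>^2 + e') \<le> ennreal (a * \<rho>^2) + ennreal e"
    proof -
      have "ennreal a * ennreal (\<rho>^2 + e') = ennreal (a * (\<rho>^2 + e'))"
        by (rule ennreal_mult[symmetric]) (use a e' in auto)
      also have "\<dots> \<le> ennreal (a * \<rho>^2 + e)" using ae by (intro ennreal_leI) (simp add: distrib_left)
      also have "\<dots> = ennreal (a * \<rho>^2) + ennreal e" by (rule ennreal_plus) (use a e in auto)
      finally show ?thesis .
    qed
    finally show "?X \<le> ennreal (a * \<rho>^2) + ?Q + ennreal e"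
      by (simp add: ac_simps)
  qed
qed

definition phi :: "real mat \<Rightarrow> (nat \<Rightarrow> real) \<Rightarrow> (nat \<Rightarrow> real)" where
  "phi B xi = (\<lambda>i\<in>{..<N}. (B *\<^sub>v Matrix.vec N xi) $ i)"

lemma vec_phi: assumes B: "B \<in> carrier_mat N N"
  shows "Matrix.vec N (phi B xi) = B *\<^sub>v Matrix.vec N xi"
  by (rule eq_vecI) (use B in \<open>auto simp: phi_def\<close>)

lemma phi_meas: assumes B: "B \<in> carrier_mat N N"
  shows "phi B \<in> measurable (RN N) (RN N)"
proof -
  have e: "(\<lambda>xi. (B *\<^sub>v Matrix.vec N xi) $ i) = (\<lambda>xi. \<Sum>c<N. B $$ (i,c) * xi c)" if "i < N" for i
    using B that by (auto simp: scalar_prod_def atLeast0LessThan intro!: ext sum.cong)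
  have "(\<lambda>xi. \<lambda>i\<in>{..<N}. (B *\<^sub>v Matrix.vec N xi) $ i) \<in> measurable (RN N) (PiM {..<N} (\<lambda>_. borel))"
    by (rule measurable_restrict) (simp add: e lin_meas)
  thus ?thesis unfolding phi_def by (simp add: RN_def)
qed

lemma quadf_phi: assumes B: "B \<in> carrier_mat N N" and X: "X \<in> carrier_mat m N"
  shows "quadf X N (phi B xi) = quadf (X * B) N xi"
  unfolding quadf_def vec_phi[OF B] using X B by simp

lemma phi_meas_P0: assumes B: "B \<in> carrier_mat N N" shows "phi B \<in> measurable P0 (RN N)"
  using phi_meas[OF B] measurable_cong_sets[OF sets_P0 refl] by blast

lemma nn_push: assumes B: "B \<in> carrier_mat N N" and X: "X \<in> carrier_mat m N"
  shows "(\<integral>\<^sup>+xi. ennreal (quadf X N xi) \<partial>distr P0 (RN N) (phi B)) = ennreal (fro (X * B))"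
proof -
  have "(\<integral>\<^sup>+xi. ennreal (quadf X N xi) \<partial>distr P0 (RN N) (phi B)) = (\<integral>\<^sup>+xi. ennreal (quadf X N (phi B xi)) \<partial>P0)"
    by (rule nn_integral_distr[OF phi_meas_P0[OF B]]) (simp add: enn_meas[OF quadf_meas[OF X]])
  also have "\<dots> = (\<integral>\<^sup>+xi. ennreal (quadf (X * B) N xi) \<partial>P0)" by (simp add: quadf_phi[OF B X])
  also have "\<dots> = ennreal (fro (X * B))" by (rule nn_quadf[of "X * B" m]) (use X B in simp)
  finally show ?thesis .
qed

lemma sqnorm_quadf: "sqnorm N x = quadf (1\<^sub>m N) N x"
  by (simp add: sqnorm_vec quadf_def nsq_def)

lemma push_distrs2: assumes B: "B \<in> carrier_mat N N"
  shows "distr P0 (RN N) (phi B) \<in> distrs2 N"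
proof -
  have "prob_space (distr P0 (RN N) (phi B))"
    by (rule prob_space.prob_space_distr[OF prob phi_meas_P0[OF B]])
  moreover have "(\<integral>\<^sup>+x. ennreal (sqnorm N x) \<partial>distr P0 (RN N) (phi B)) < \<infinity>"
    unfolding sqnorm_quadf nn_push[OF B one_carrier_mat] by simp
  ultimately show ?thesis unfolding distrs2_def by simp
qed

lemma push_ball: assumes B: "B \<in> carrier_mat N N" and rho: "fro (B - 1\<^sub>m N) \<le> \<rho>^2"
  shows "distr P0 (RN N) (phi B) \<in> wball N P0 \<rho>"
proof -
  let ?PB = "distr P0 (RN N) (phi B)"
  let ?cost = "\<lambda>z. sqnorm N (\<lambda>i. fst z i - snd z i)"
  have mid: "(\<lambda>x. x) \<in> measurable P0 (RN N)"
    using measurable_ident_sets[OF sets_P0] .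
  have mpair: "(\<lambda>xi. (phi B xi, xi)) \<in> measurable P0 (RN N \<Otimes>\<^sub>M RN N)"
    by (rule measurable_Pair[OF phi_meas_P0[OF B] mid])
  define C where "C = distr P0 (RN N \<Otimes>\<^sub>M RN N) (\<lambda>xi. (phi B xi, xi))"
  have C: "C \<in> couplings N ?PB P0"
  proof -
    have "prob_space C" unfolding C_def by (rule prob_space.prob_space_distr[OF prob mpair])
    moreover have "distr C (RN N) fst = ?PB"
      unfolding C_def by (subst distr_distr[OF measurable_fst mpair]) (simp add: comp_def)
    moreover have "distr C (RN N) snd = P0"
      unfolding C_def by (subst distr_distr[OF measurable_snd mpair]) (simp add: comp_def distr_id2[OF sets_P0[symmetric]])
    ultimately show ?thesis unfolding couplings_def C_def by simp
  qed
  have "wasserstein2_sq N ?PB P0 \<le> (\<integral>\<^sup>+z. ennreal (?cost z) \<partial>C)"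
    unfolding wasserstein2_sq_def by (rule INF_lower[OF C])
  also have "\<dots> = (\<integral>\<^sup>+xi. ennreal (?cost (phi B xi, xi)) \<partial>P0)"
    unfolding C_def by (rule nn_integral_distr[OF mpair]) (simp add: enn_meas[OF cost_meas])
  also have "\<dots> = (\<integral>\<^sup>+xi. ennreal (quadf (B - 1\<^sub>m N) N xi) \<partial>P0)"
  proof -
    have "?cost (phi B xi, xi) = quadf (B - 1\<^sub>m N) N xi" for xi
    proof -
      have e1: "(B - 1\<^sub>m N) *\<^sub>v Matrix.vec N xi = B *\<^sub>v Matrix.vec N xi - Matrix.vec N xi"
        by (subst minus_mult_distrib_mat_vec[OF B one_carrier_mat]) auto
      have "Matrix.vec N (\<lambda>i. phi B xi i - xi i) = (B - 1\<^sub>m N) *\<^sub>v Matrix.vec N xi"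
        unfolding e1 by (rule eq_vecI) (use B in \<open>auto simp: phi_def\<close>)
      thus ?thesis by (simp add: sqnorm_vec quadf_def nsq_def)
    qed
    thus ?thesis by simp
  qed
  also have "\<dots> = ennreal (fro (B - 1\<^sub>m N))" by (rule nn_quadf[of "B - 1\<^sub>m N" N], rule minus_carrier_mat[OF one_carrier_mat])
  also have "\<dots> \<le> ennreal (\<rho>^2)" using rho by (rule ennreal_leI)
  finally show ?thesis unfolding wball_def using push_distrs2[OF B] by simp
qed

end



definition frin :: "real mat \<Rightarrow> real mat \<Rightarrow> real" where
  "frin X Y = (\<Sum>i<dim_row X. \<Sum>j<dim_col X. X $$ (i,j) * Y $$ (i,j))"

lemma sum_split_nat: fixes f :: "nat \<Rightarrow> 'a::comm_monoid_add" and a b :: nat shows "(\<Sum>c<a+b. f c) = (\<Sum>c<a. f c) + (\<Sum>j<b. f (a + j))"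
  by (induct b) (simp_all add: ac_simps)

lemma fro_add: assumes X: "X \<in> carrier_mat m n" and Y: "Y \<in> carrier_mat m n"
  shows "fro (X + Y) = fro X + fro Y + 2 * frin X Y"
proof -
  have "fro (X + Y) = (\<Sum>i<m. \<Sum>j<n. (X $$ (i,j))^2 + (Y $$ (i,j))^2 + 2 * (X $$ (i,j) * Y $$ (i,j)))"
    using X Y by (auto simp: fro_def power2_eq_square algebra_simps intro!: sum.cong)
  also have "\<dots> = fro X + fro Y + 2 * frin X Y"
    using X Y by (simp add: fro_def frin_def sum.distrib sum_distrib_left)
  finally show ?thesis .
qed

lemma frin_mult: assumes X: "X \<in> carrier_mat m n" and D: "D \<in> carrier_mat m k" and G: "G \<in> carrier_mat k n"
  shows "frin X (D * G) = frin (X * transpose_mat G) D"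
proof -
  have "frin X (D * G) = (\<Sum>i<m. \<Sum>c<n. X $$ (i,c) * (\<Sum>j<k. D $$ (i,j) * G $$ (j,c)))"
    using X D G by (auto simp: frin_def scalar_prod_def atLeast0LessThan intro!: sum.cong)
  also have "\<dots> = (\<Sum>i<m. \<Sum>c<n. \<Sum>j<k. D $$ (i,j) * (X $$ (i,c) * G $$ (j,c)))"
    by (simp add: sum_distrib_left algebra_simps)
  also have "\<dots> = (\<Sum>i<m. \<Sum>j<k. \<Sum>c<n. D $$ (i,j) * (X $$ (i,c) * G $$ (j,c)))"
    by (intro sum.cong refl sum.swap)
  also have "\<dots> = (\<Sum>i<m. \<Sum>j<k. (\<Sum>c<n. X $$ (i,c) * G $$ (j,c)) * D $$ (i,j))"
    by (simp add: sum_distrib_left algebra_simps)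
  also have "\<dots> = frin (X * transpose_mat G) D"
    using X D G by (auto simp: frin_def scalar_prod_def atLeast0LessThan intro!: sum.cong)
  finally show ?thesis .
qed

lemma frin_zero: "frin (0\<^sub>m m k) D = 0" by (simp add: frin_def)

lemma fro_entry: assumes X: "X \<in> carrier_mat m n" and i: "i < m" and j: "j < n"
  shows "(X $$ (i,j))^2 \<le> fro X"
proof -
  have "(X $$ (i,j))^2 \<le> (\<Sum>c<n. (X $$ (i,c))^2)"
    by (rule member_le_sum[of j "{..<n}" "\<lambda>c. (X $$ (i,c))^2"]) (use j in auto)
  also have "\<dots> \<le> (\<Sum>r<m. \<Sum>c<n. (X $$ (r,c))^2)"
    by (rule member_le_sum[of i "{..<m}" "\<lambda>r. \<Sum>c<n. (X $$ (r,c))^2"]) (use i in \<open>auto intro: sum_nonneg\<close>)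
  finally show ?thesis using X by (simp add: fro_def)
qed

context
  fixes H :: "real mat" and Nw Ny :: nat
  assumes H: "H \<in> carrier_mat Ny Nw"
begin

lemma err_carrier: "K \<in> carrier_mat m Ny \<Longrightarrow> L \<in> carrier_mat m Nw \<Longrightarrow> err_op K H L \<in> carrier_mat m (Nw + Ny)"
  using H by (auto simp: err_op_def)

lemma err_entry: assumes K: "K \<in> carrier_mat m Ny" and L: "L \<in> carrier_mat m Nw" and r: "r < m" and c: "c < Nw + Ny"
  shows "err_op K H L $$ (r,c) = (if c < Nw then (K * H - L) $$ (r,c) else K $$ (r, c - Nw))"
  using H K L r c by (auto simp: err_op_def)

lemma err_G: assumes D: "D \<in> carrier_mat m Ny"
  shows "D * err_op (1\<^sub>m Ny) H (0\<^sub>m Ny Nw) = err_op D H (0\<^sub>m m Nw)"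
proof (rule eq_matI)
  have G: "err_op (1\<^sub>m Ny) H (0\<^sub>m Ny Nw) \<in> carrier_mat Ny (Nw + Ny)" by (rule err_carrier) auto
  fix r c assume rc: "r < dim_row (err_op D H (0\<^sub>m m Nw))" "c < dim_col (err_op D H (0\<^sub>m m Nw))"
  hence r: "r < m" and c: "c < Nw + Ny" using err_carrier[OF D, of "0\<^sub>m m Nw"] by auto
  have "(D * err_op (1\<^sub>m Ny) H (0\<^sub>m Ny Nw)) $$ (r,c) = (\<Sum>j<Ny. D $$ (r,j) * err_op (1\<^sub>m Ny) H (0\<^sub>m Ny Nw) $$ (j,c))"
    using D G r c by (auto simp: scalar_prod_def atLeast0LessThan intro!: sum.cong)
  also have "\<dots> = (\<Sum>j<Ny. D $$ (r,j) * (if c < Nw then H $$ (j,c) else (if j = c - Nw then 1 else 0)))"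
    by (intro sum.cong refl) (use H c in \<open>auto simp: err_entry[OF one_carrier_mat zero_carrier_mat]\<close>)
  also have "\<dots> = err_op D H (0\<^sub>m m Nw) $$ (r,c)"
  proof (cases "c < Nw")
    case True
    thus ?thesis using D H r c by (auto simp: err_entry scalar_prod_def atLeast0LessThan intro!: sum.cong)
  next
    case False
    hence "c - Nw < Ny" using c by simp
    thus ?thesis using D H r c False by (auto simp: err_entry if_distrib cong: if_cong)
  qed
  finally show "(D * err_op (1\<^sub>m Ny) H (0\<^sub>m Ny Nw)) $$ (r,c) = err_op D H (0\<^sub>m m Nw) $$ (r,c)" .
next
  show "dim_row (D * err_op (1\<^sub>m Ny) H (0\<^sub>m Ny Nw)) = dim_row (err_op D H (0\<^sub>m m Nw))"
    using D by (simp add: err_op_def)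
  show "dim_col (D * err_op (1\<^sub>m Ny) H (0\<^sub>m Ny Nw)) = dim_col (err_op D H (0\<^sub>m m Nw))"
    using D by (simp add: err_op_def)
qed

lemma err_split: assumes K: "K \<in> carrier_mat m Ny" and K0: "K0 \<in> carrier_mat m Ny" and L: "L \<in> carrier_mat m Nw"
  shows "err_op K H L = err_op K0 H L + (K - K0) * err_op (1\<^sub>m Ny) H (0\<^sub>m Ny Nw)"
proof -
  have D: "K - K0 \<in> carrier_mat m Ny" by (rule minus_carrier_mat[OF K0])
  have "(K - K0) * H = K * H - K0 * H" using K K0 H by (simp add: minus_mult_distrib_mat)
  show ?thesis unfolding err_G[OF D]
  proof (rule eq_matI)
    fix r c assume "r < dim_row (err_op K0 H L + err_op (K - K0) H (0\<^sub>m m Nw))"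
      "c < dim_col (err_op K0 H L + err_op (K - K0) H (0\<^sub>m m Nw))"
    hence r: "r < m" and c: "c < Nw + Ny" using err_carrier[OF D, of "0\<^sub>m m Nw"] by auto
    have sum: "(err_op K0 H L + err_op (K - K0) H (0\<^sub>m m Nw)) $$ (r,c) = err_op K0 H L $$ (r,c) + err_op (K - K0) H (0\<^sub>m m Nw) $$ (r,c)"
      using carrier_matD[OF err_carrier[OF D, of "0\<^sub>m m Nw"]] r c by (intro index_add_mat) auto
    have e1: "((K - K0) * H) $$ (r,c) = (K * H) $$ (r,c) - (K0 * H) $$ (r,c)" if "c < Nw"
      unfolding `(K - K0) * H = K * H - K0 * H` by (rule index_minus_mat) (use r that K0 H in auto)
    have e2: "(K - K0) $$ (r, c - Nw) = K $$ (r, c - Nw) - K0 $$ (r, c - Nw)" if "\<not> c < Nw"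
      by (rule index_minus_mat) (use r c that K0 in auto)
    have e3: "(K * H - L) $$ (r,c) = (K * H) $$ (r,c) - L $$ (r,c)" "(K0 * H - L) $$ (r,c) = (K0 * H) $$ (r,c) - L $$ (r,c)"
      if "c < Nw" by (rule index_minus_mat; use r that L in auto)+
    have e4: "((K - K0) * H - 0\<^sub>m m Nw) $$ (r,c) = ((K - K0) * H) $$ (r,c)" if "c < Nw"
      by (subst index_minus_mat) (use r that in auto)
    show "err_op K H L $$ (r,c) = (err_op K0 H L + err_op (K - K0) H (0\<^sub>m m Nw)) $$ (r,c)"
      unfolding sum err_entry[OF K L r c] err_entry[OF K0 L r c] err_entry[OF D zero_carrier_mat r c]
      using e1 e2 e3 e4 by auto
  qed (use err_carrier[OF K L] err_carrier[OF K0 L] err_carrier[OF D, of "0\<^sub>m m Nw"] in auto)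
qed

lemma err_prod: assumes K1: "K1 \<in> carrier_mat m1 Ny" and L1: "L1 \<in> carrier_mat m1 Nw"
  and K2: "K2 \<in> carrier_mat m2 Ny" and L2: "L2 \<in> carrier_mat m2 Nw"
  shows "err_op K1 H L1 * transpose_mat (err_op K2 H L2) = (K1 * H - L1) * transpose_mat (K2 * H - L2) + K1 * transpose_mat K2"
proof (rule eq_matI)
  fix r k assume "r < dim_row ((K1 * H - L1) * transpose_mat (K2 * H - L2) + K1 * transpose_mat K2)"
    "k < dim_col ((K1 * H - L1) * transpose_mat (K2 * H - L2) + K1 * transpose_mat K2)"
  hence r: "r < m1" and k: "k < m2" using K1 K2 by auto
  have E1: "err_op K1 H L1 \<in> carrier_mat m1 (Nw + Ny)" by (rule err_carrier[OF K1 L1])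
  have E2: "err_op K2 H L2 \<in> carrier_mat m2 (Nw + Ny)" by (rule err_carrier[OF K2 L2])
  have "(err_op K1 H L1 * transpose_mat (err_op K2 H L2)) $$ (r,k)
      = (\<Sum>c<Nw + Ny. err_op K1 H L1 $$ (r,c) * err_op K2 H L2 $$ (k,c))"
    using E1 E2 r k by (auto simp: scalar_prod_def atLeast0LessThan intro!: sum.cong)
  also have "\<dots> = (\<Sum>c<Nw. err_op K1 H L1 $$ (r,c) * err_op K2 H L2 $$ (k,c))
      + (\<Sum>j<Ny. err_op K1 H L1 $$ (r,Nw + j) * err_op K2 H L2 $$ (k,Nw + j))"
    by (rule sum_split_nat)
  also have "\<dots> = (\<Sum>c<Nw. (K1 * H - L1) $$ (r,c) * (K2 * H - L2) $$ (k,c)) + (\<Sum>j<Ny. K1 $$ (r,j) * K2 $$ (k,j))"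
    using r k by (simp add: err_entry[OF K1 L1] err_entry[OF K2 L2])
  also have "\<dots> = ((K1 * H - L1) * transpose_mat (K2 * H - L2) + K1 * transpose_mat K2) $$ (r,k)"
    using K1 K2 L1 L2 H r k by (auto simp: scalar_prod_def atLeast0LessThan intro!: sum.cong)
  finally show "(err_op K1 H L1 * transpose_mat (err_op K2 H L2)) $$ (r,k)
      = ((K1 * H - L1) * transpose_mat (K2 * H - L2) + K1 * transpose_mat K2) $$ (r,k)" .
qed (use K1 K2 L1 L2 in \<open>auto simp: err_op_def\<close>)

end



lemma nsq_diff: assumes a: "a \<in> carrier_vec n" and b: "b \<in> carrier_vec n"
  shows "nsq (a - b) = nsq a - 2 * scalar_prod a b + nsq b"
proof -
  have "nsq (a - b) = scalar_prod a (a - b) - scalar_prod b (a - b)"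
    unfolding nsq_def by (rule minus_scalar_prod_distrib[of _ n]) (use a b in auto)
  also have "scalar_prod a (a - b) = scalar_prod a a - scalar_prod a b"
    by (rule scalar_prod_minus_distrib[of _ n]) (use a b in auto)
  also have "scalar_prod b (a - b) = scalar_prod b a - scalar_prod b b"
    by (rule scalar_prod_minus_distrib[of _ n]) (use a b in auto)
  also have "scalar_prod b a = scalar_prod a b" by (rule comm_scalar_prod[OF b a])
  finally show ?thesis by (simp add: nsq_def)
qed

lemma amgm: fixes t a b e :: real
  assumes "t^2 \<le> a * b" "0 \<le> a" "0 \<le> b" "0 < e"
  shows "2 * t \<le> e * a + b / e"
proof -
  have "0 \<le> (e * a - b / e)^2" by simp
  hence "4 * (a * b) \<le> (e * a + b / e)^2" using assms(4) by (simp add: power2_eq_square field_simps)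
  hence "(2 * t)^2 \<le> (e * a + b / e)^2" using assms(1) by (simp add: power2_eq_square)
  moreover have "0 \<le> e * a + b / e" using assms by simp
  ultimately have "\<bar>2 * t\<bar> \<le> e * a + b / e" using abs_le_square_iff by (metis abs_of_nonneg)
  thus ?thesis by simp
qed

lemma eps_bound: fixes X :: "real mat"
  assumes X: "X \<in> carrier_mat m n" and x: "x \<in> carrier_vec n" and y: "y \<in> carrier_vec n" and e: "0 < e"
  shows "nsq (X *\<^sub>v x) \<le> (1 + e) * nsq (X *\<^sub>v y) + (1 + 1 / e) * fro X * nsq (x - y)"
proof -
  define w where "w = X *\<^sub>v x"
  define p where "p = X *\<^sub>v y"
  define q where "q = X *\<^sub>v (x - y)"
  have w: "w \<in> carrier_vec m" and p: "p \<in> carrier_vec m" using X x y by (auto simp: w_def p_def)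
  have qe: "q = w - p" unfolding q_def w_def p_def by (rule mult_minus_distrib_mat_vec[OF X x y])
  have q: "q \<in> carrier_vec m" using qe w p by simp
  have f1: "nsq q = nsq w - 2 * scalar_prod w p + nsq p" unfolding qe by (rule nsq_diff[OF w p])
  have f2: "scalar_prod q p = scalar_prod w p - nsq p"
    unfolding qe nsq_def by (rule minus_scalar_prod_distrib[of _ m]) (use w p in auto)
  have cs: "(scalar_prod q p)^2 \<le> nsq p * nsq q"
    using cs_vec[OF q p] by (simp add: mult.commute)
  have f3: "2 * scalar_prod q p \<le> e * nsq p + nsq q / e"
    by (rule amgm[OF cs nsq_nonneg nsq_nonneg e])
  have f4: "nsq q \<le> fro X * nsq (x - y)" unfolding q_def by (rule mat_vec_bound[OF X]) (use x y in simp)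
  have "nsq w = nsq q + 2 * scalar_prod q p + nsq p" using f1 f2 by simp
  also have "\<dots> \<le> (1 + e) * nsq p + (1 + 1 / e) * nsq q"
    using f3 by (simp add: algebra_simps)
  also have "\<dots> \<le> (1 + e) * nsq p + (1 + 1 / e) * (fro X * nsq (x - y))"
    using f4 e by (intro add_left_mono mult_left_mono) auto
  finally show ?thesis unfolding w_def p_def by (simp add: mult.assoc)
qed

context gm begin

lemma ub_vec: assumes g: "g > lam" and x: "x \<in> carrier_vec n" and y: "y \<in> carrier_vec n"
  shows "nsq (Tm *\<^sub>v x) \<le> g * nsq (x - y) + (nsq (Tm *\<^sub>v ((g \<cdot>\<^sub>m R g) *\<^sub>v y)) - g * nsq ((g \<cdot>\<^sub>m R g) *\<^sub>v y - y))"
proof -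
  have Rc: "R g \<in> carrier_mat n n" by (rule R_carrier[OF g])
  define ay where "ay = (g \<cdot>\<^sub>m R g) *\<^sub>v y"
  have ay_eq: "ay = g \<cdot>\<^sub>v (R g *\<^sub>v y)"
    unfolding ay_def by (rule eq_vecI) (use Rc y in \<open>auto simp: scalar_prod_def sum_distrib_left algebra_simps\<close>)
  have ay: "ay \<in> carrier_vec n" using ay_eq Rc y by simp
  define u where "u = x - ay"
  have u: "u \<in> carrier_vec n" using x ay by (simp add: u_def)
  define r where "r = Tm *\<^sub>v ay"
  have r: "r \<in> carrier_vec m" using Tm ay by (simp add: r_def)
  have tx: "Tm *\<^sub>v x \<in> carrier_vec m" using Tm x by simp
  have Tu: "Tm *\<^sub>v u = Tm *\<^sub>v x - r" unfolding u_def r_def by (rule mult_minus_distrib_mat_vec[OF Tm x ay])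
  have Pay: "P g *\<^sub>v ay = g \<cdot>\<^sub>v y"
    unfolding ay_eq using PR_vec[OF g y] Rc y by (simp add: mult_mat_vec[OF P_carrier])
  have May: "M *\<^sub>v ay = g \<cdot>\<^sub>v ay - g \<cdot>\<^sub>v y"
  proof (rule eq_vecI)
    fix i assume "i < dim_vec (g \<cdot>\<^sub>v ay - g \<cdot>\<^sub>v y)"
    hence i: "i < n" using y by simp
    have "(P g *\<^sub>v ay) $ i = g * ay $ i - (M *\<^sub>v ay) $ i" using P_apply[OF ay, of g] i ay by simp
    moreover have "(P g *\<^sub>v ay) $ i = g * y $ i" using Pay i y by simp
    ultimately show "(M *\<^sub>v ay) $ i = (g \<cdot>\<^sub>v ay - g \<cdot>\<^sub>v y) $ i" using i ay y by simp
  qed (use ay y in simp)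
  have F1: "nsq (Tm *\<^sub>v u) = nsq (Tm *\<^sub>v x) - 2 * scalar_prod (Tm *\<^sub>v x) r + nsq r"
    unfolding Tu by (rule nsq_diff[OF tx r])
  have F2: "0 \<le> g * nsq u - nsq (Tm *\<^sub>v u)" using P_psd[OF g u] quad_P[OF u, of g] by simp
  have F3: "nsq u = nsq x - 2 * scalar_prod x ay + nsq ay" unfolding u_def by (rule nsq_diff[OF x ay])
  have F4: "nsq (x - y) = nsq x - 2 * scalar_prod x y + nsq y" by (rule nsq_diff[OF x y])
  have F5: "nsq (ay - y) = nsq ay - 2 * scalar_prod ay y + nsq y" by (rule nsq_diff[OF ay y])
  have F6: "scalar_prod (Tm *\<^sub>v x) r = g * scalar_prod x ay - g * scalar_prod x y"
  proof -
    have "scalar_prod (Tm *\<^sub>v x) r = scalar_prod x (M *\<^sub>v ay)"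
      unfolding r_def M_def by (rule bilin_transpose[OF Tm x ay, symmetric])
    also have "\<dots> = scalar_prod x (g \<cdot>\<^sub>v ay) - scalar_prod x (g \<cdot>\<^sub>v y)"
      unfolding May by (rule scalar_prod_minus_distrib[of _ n]) (use x ay y in auto)
    finally show ?thesis using x ay y by simp
  qed
  have F7: "nsq r = g * nsq ay - g * scalar_prod ay y"
  proof -
    have "nsq r = scalar_prod ay (M *\<^sub>v ay)" unfolding r_def by (rule quad_M[OF ay, symmetric])
    also have "\<dots> = scalar_prod ay (g \<cdot>\<^sub>v ay) - scalar_prod ay (g \<cdot>\<^sub>v y)"
      unfolding May by (rule scalar_prod_minus_distrib[of _ n]) (use ay y in auto)
    finally show ?thesis using ay y by (simp add: nsq_def)
  qed
  have G3: "g * nsq u = g * nsq x - 2 * (g * scalar_prod x ay) + g * nsq ay" unfolding F3 by (simp add: algebra_simps)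
  have G4: "g * nsq (x - y) = g * nsq x - 2 * (g * scalar_prod x y) + g * nsq y" unfolding F4 by (simp add: algebra_simps)
  have G5: "g * nsq (ay - y) = g * nsq ay - 2 * (g * scalar_prod ay y) + g * nsq y" unfolding F5 by (simp add: algebra_simps)
  show ?thesis unfolding ay_def[symmetric] r_def[symmetric]
    using F1 F2 G3 G4 G5 F6 F7 by linarith
qed

end



locale est =
  fixes H L :: "real mat" and Nw Ny Ns :: nat and P0 :: "(nat \<Rightarrow> real) measure"
  assumes H: "H \<in> carrier_mat Ny Nw" and L: "L \<in> carrier_mat Ns Nw" and Npos: "0 < Nw + Ny"
    and P0: "P0 \<in> distrs2 (Nw + Ny)"
    and cov: "\<forall>i < Nw + Ny. \<forall>j < Nw + Ny. (\<integral>xi. xi i * xi j \<partial>P0) = (if i = j then 1 else 0)"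
begin

sublocale ic: idcov P0 "Nw + Ny" using P0 cov by unfold_locales

definition S where "S = 1\<^sub>m Ny + H * transpose_mat H"

lemma S_carrier: "S \<in> carrier_mat Ny Ny" using H by (simp add: S_def)

lemma S_quad: assumes v: "v \<in> carrier_vec Ny" shows "scalar_prod v (S *\<^sub>v v) = nsq v + nsq (transpose_mat H *\<^sub>v v)"
proof -
  have HH: "H * transpose_mat H \<in> carrier_mat Ny Ny" using H by simp
  have "S *\<^sub>v v = 1\<^sub>m Ny *\<^sub>v v + (H * transpose_mat H) *\<^sub>v v"
    unfolding S_def by (rule add_mult_distrib_mat_vec[OF one_carrier_mat HH v])
  hence "scalar_prod v (S *\<^sub>v v) = scalar_prod v v + scalar_prod v ((H * transpose_mat H) *\<^sub>v v)"
    using v HH by (simp add: scalar_prod_add_distrib[of _ Ny])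
  moreover have "scalar_prod v ((H * transpose_mat H) *\<^sub>v v) = nsq (transpose_mat H *\<^sub>v v)"
    using quad_transpose[of "transpose_mat H" Nw Ny v] H v by simp
  ultimately show ?thesis by (simp add: nsq_def)
qed

lemma S_inv: "\<exists>Si. mat_inverse S = Some Si \<and> S * Si = 1\<^sub>m Ny \<and> Si * S = 1\<^sub>m Ny \<and> Si \<in> carrier_mat Ny Ny"
proof -
  have "Determinant.det S \<noteq> 0"
  proof
    assume "Determinant.det S = 0"
    then obtain v where v: "v \<in> carrier_vec Ny" "v \<noteq> 0\<^sub>v Ny" "S *\<^sub>v v = 0\<^sub>v Ny"
      using det_0_iff_vec_prod_zero[OF S_carrier] by blast
    have "nsq v + nsq (transpose_mat H *\<^sub>v v) = 0" using S_quad[OF v(1)] v by simp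
    hence "nsq v = 0" using nsq_nonneg[of v] nsq_nonneg[of "transpose_mat H *\<^sub>v v"] by linarith
    thus False using nsq_zero[OF v(1)] v(2) by simp
  qed
  hence U: "S \<in> Units (ring_mat TYPE(real) Ny ())" by (rule det_non_zero_imp_unit[OF S_carrier])
  show ?thesis
  proof (cases "mat_inverse S")
    case None
    thus ?thesis using mat_inverse(1)[OF S_carrier None, of "()"] U by simp
  next
    case (Some B)
    thus ?thesis using mat_inverse(2)[OF S_carrier Some] by auto
  qed
qed

definition Si where "Si = the (mat_inverse S)"

lemma Si: "S * Si = 1\<^sub>m Ny" "Si * S = 1\<^sub>m Ny" "Si \<in> carrier_mat Ny Ny"
  using S_inv unfolding Si_def by auto

definition K0 where "K0 = central_estimator H L"

lemma K0_eq: "K0 = L * transpose_mat H * Si"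
  using H unfolding K0_def central_estimator_def Si_def S_def by simp

lemma K0_carrier: "K0 \<in> carrier_mat Ns Ny" unfolding K0_eq using L H Si(3) by simp

lemma K0S: "K0 * S = L * transpose_mat H"
proof -
  have "K0 * S = L * transpose_mat H * (Si * S)" unfolding K0_eq
    by (rule assoc_mult_mat[of _ Ns Ny _ Ny _ Ny]) (use L H Si(3) S_carrier in auto)
  thus ?thesis using Si(2) L H by simp
qed

definition G where "G = err_op (1\<^sub>m Ny) H (0\<^sub>m Ny Nw)"
definition T0 where "T0 = err_op K0 H L"

lemma G_carrier: "G \<in> carrier_mat Ny (Nw + Ny)" unfolding G_def by (rule err_carrier[OF H]) auto
lemma T0_carrier: "T0 \<in> carrier_mat Ns (Nw + Ny)" unfolding T0_def by (rule err_carrier[OF H K0_carrier L])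

lemma orth: "T0 * transpose_mat G = 0\<^sub>m Ns Ny"
proof -
  have Hc: "transpose_mat H \<in> carrier_mat Nw Ny" using H by simp
  have "T0 * transpose_mat G = (K0 * H - L) * transpose_mat (1\<^sub>m Ny * H - 0\<^sub>m Ny Nw) + K0 * transpose_mat (1\<^sub>m Ny)"
    unfolding T0_def G_def by (rule err_prod[OF H K0_carrier L]) auto
  also have "1\<^sub>m Ny * H - 0\<^sub>m Ny Nw = H" by (rule eq_matI) (use H in auto)
  also have "K0 * transpose_mat (1\<^sub>m Ny) = K0" using K0_carrier by simp
  also have "(K0 * H - L) * transpose_mat H = K0 * H * transpose_mat H - L * transpose_mat H"
    by (rule minus_mult_distrib_mat[OF _ L Hc]) (use K0_carrier H in simp)
  also have "K0 * H * transpose_mat H = K0 * (H * transpose_mat H)"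
    using K0_carrier H Hc by (simp add: assoc_mult_mat[of _ Ns Ny _ Nw _ Ny])
  finally have T: "T0 * transpose_mat G = K0 * (H * transpose_mat H) - L * transpose_mat H + K0" .
  have "K0 * S = K0 * 1\<^sub>m Ny + K0 * (H * transpose_mat H)"
    unfolding S_def by (rule mult_add_distrib_mat[OF K0_carrier]) (use H in auto)
  also have "K0 * 1\<^sub>m Ny = K0" using K0_carrier by simp
  finally have E: "K0 + K0 * (H * transpose_mat H) = L * transpose_mat H" using K0S by simp
  show ?thesis unfolding T
  proof (rule eq_matI)
    fix i j assume "i < dim_row (0\<^sub>m Ns Ny)" "j < dim_col (0\<^sub>m Ns Ny)"
    hence ij: "i < Ns" "j < Ny" by auto
    have "(K0 + K0 * (H * transpose_mat H)) $$ (i,j) = (L * transpose_mat H) $$ (i,j)" using E by simp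
    thus "(K0 * (H * transpose_mat H) - L * transpose_mat H + K0) $$ (i,j) = 0\<^sub>m Ns Ny $$ (i,j)"
      using ij K0_carrier H L by simp
  qed (use K0_carrier H L in auto)
qed

lemma DG_pos: assumes D: "D \<in> carrier_mat Ns Ny" and nz: "D \<noteq> 0\<^sub>m Ns Ny"
  shows "0 < fro (D * G)"
proof -
  have "\<exists>i j. i < Ns \<and> j < Ny \<and> D $$ (i,j) \<noteq> 0"
  proof (rule ccontr)
    assume "\<nexists>i j. i < Ns \<and> j < Ny \<and> D $$ (i,j) \<noteq> 0"
    hence "D = 0\<^sub>m Ns Ny" using D by (intro eq_matI) auto
    thus False using nz by simp
  qed
  then obtain i j where ij: "i < Ns" "j < Ny" "D $$ (i,j) \<noteq> 0" by blast
  have DG: "D * G = err_op D H (0\<^sub>m Ns Nw)" unfolding G_def by (rule err_G[OF H D])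
  have c: "err_op D H (0\<^sub>m Ns Nw) \<in> carrier_mat Ns (Nw + Ny)" by (rule err_carrier[OF H D]) auto
  have "err_op D H (0\<^sub>m Ns Nw) $$ (i, Nw + j) = D $$ (i,j)"
    using err_entry[OF H D zero_carrier_mat, of i "Nw + j"] ij by simp
  hence "(D $$ (i,j))^2 \<le> fro (D * G)" unfolding DG using fro_entry[OF c, of i "Nw + j"] ij by simp
  moreover have "0 < (D $$ (i,j))^2" using ij by simp
  ultimately show ?thesis by linarith
qed

lemma lb_val: assumes K: "K \<in> carrier_mat Ns Ny" and A: "A \<in> carrier_mat (Nw + Ny) (Nw + Ny)"
  and GA: "G * A = G" and AG: "A * transpose_mat G = transpose_mat G"
  shows "fro (err_op K H L * A) = fro (T0 * A) + fro ((K - K0) * G)"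
proof -
  have D: "K - K0 \<in> carrier_mat Ns Ny" by (rule minus_carrier_mat[OF K0_carrier])
  have DGc: "(K - K0) * G \<in> carrier_mat Ns (Nw + Ny)" using D G_carrier by simp
  have "err_op K H L * A = (T0 + (K - K0) * G) * A"
    unfolding T0_def G_def by (subst err_split[OF H K K0_carrier L]) simp
  also have "\<dots> = T0 * A + (K - K0) * G * A"
    by (rule add_mult_distrib_mat[OF T0_carrier DGc A])
  also have "(K - K0) * G * A = (K - K0) * G"
    using D G_carrier A GA by (simp add: assoc_mult_mat[of _ Ns Ny _ "Nw + Ny" _ "Nw + Ny"])
  finally have e: "err_op K H L * A = T0 * A + (K - K0) * G" .
  have TA: "T0 * A \<in> carrier_mat Ns (Nw + Ny)" using T0_carrier A by simp
  have "frin (T0 * A) ((K - K0) * G) = frin (T0 * A * transpose_mat G) (K - K0)"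
    by (rule frin_mult[OF TA D G_carrier])
  also have "T0 * A * transpose_mat G = T0 * transpose_mat G"
    using T0_carrier A G_carrier AG by (simp add: assoc_mult_mat[of _ Ns "Nw + Ny" _ "Nw + Ny" _ Ny])
  also have "\<dots> = 0\<^sub>m Ns Ny" by (rule orth)
  finally have "frin (T0 * A) ((K - K0) * G) = 0" by (simp add: frin_zero)
  thus ?thesis unfolding e using fro_add[OF TA DGc] by simp
qed

lemma worst_eq: assumes K: "K \<in> carrier_mat Ns Ny"
  shows "worst_mse H L K P0 \<rho> = (SUP P \<in> wball (Nw + Ny) P0 \<rho>. \<integral>\<^sup>+xi. ennreal (quadf (err_op K H L) (Nw + Ny) xi) \<partial>P)"
proof -
  have "dim_col (err_op K H L) = Nw + Ny" using err_carrier[OF H K L] by simp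
  thus ?thesis unfolding worst_mse_def Let_def quadf_def by simp
qed

lemma worst_lb: assumes K: "K \<in> carrier_mat Ns Ny" and A: "A \<in> carrier_mat (Nw + Ny) (Nw + Ny)"
  and r: "fro (A - 1\<^sub>m (Nw + Ny)) \<le> \<rho>^2"
  shows "ennreal (fro (err_op K H L * A)) \<le> worst_mse H L K P0 \<rho>"
proof -
  have "ennreal (fro (err_op K H L * A)) = (\<integral>\<^sup>+xi. ennreal (quadf (err_op K H L) (Nw + Ny) xi) \<partial>distr P0 (RN (Nw + Ny)) (ic.phi A))"
    by (rule ic.nn_push[OF A err_carrier[OF H K L], symmetric])
  also have "\<dots> \<le> worst_mse H L K P0 \<rho>"
    unfolding worst_eq[OF K] by (rule SUP_upper[OF ic.push_ball[OF A r]])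
  finally show ?thesis .
qed

lemma worst_ub: assumes K: "K \<in> carrier_mat Ns Ny"
  and qm: "q \<in> borel_measurable (RN (Nw + Ny))" and a: "0 \<le> a" and qn: "\<And>y. 0 \<le> q y"
  and pw: "\<And>x y. quadf (err_op K H L) (Nw + Ny) x \<le> a * sqnorm (Nw + Ny) (\<lambda>i. x i - y i) + q y"
  shows "worst_mse H L K P0 \<rho> \<le> ennreal (a * \<rho>^2) + (\<integral>\<^sup>+y. ennreal (q y) \<partial>P0)"
  unfolding worst_eq[OF K]
  by (rule SUP_least, rule ic.ub[OF _ quadf_meas[OF err_carrier[OF H K L]] qm a qn pw])

lemma sqnorm_diff_vec: "sqnorm N (\<lambda>i. x i - y i) = nsq (Matrix.vec N x - Matrix.vec N y)"
proof -
  have "Matrix.vec N (\<lambda>i. x i - y i) = Matrix.vec N x - Matrix.vec N y" by (rule eq_vecI) auto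
  thus ?thesis by (simp add: sqnorm_vec)
qed

lemma main: assumes rho: "0 \<le> \<rho>" and K: "K \<in> carrier_mat Ns Ny" and ne: "K \<noteq> K0"
  shows "worst_mse H L K0 P0 \<rho> < worst_mse H L K P0 \<rho>"
proof -
  let ?N = "Nw + Ny"
  have D: "K - K0 \<in> carrier_mat Ns Ny" by (rule minus_carrier_mat[OF K0_carrier])
  have Dnz: "K - K0 \<noteq> 0\<^sub>m Ns Ny"
  proof
    assume "K - K0 = 0\<^sub>m Ns Ny"
    note z = this
    have "K = K0"
    proof (rule eq_matI)
      fix i j assume "i < dim_row K0" "j < dim_col K0"
      hence ij: "i < Ns" "j < Ny" using K0_carrier by auto
      have "(K - K0) $$ (i,j) = 0" unfolding z using ij by simp
      moreover have "(K - K0) $$ (i,j) = K $$ (i,j) - K0 $$ (i,j)" using ij K0_carrier by (intro index_minus_mat) auto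
      ultimately show "K $$ (i,j) = K0 $$ (i,j)" by simp
    qed (use K K0_carrier in auto)
    thus False using ne by simp
  qed
  define c1 where "c1 = fro ((K - K0) * G)"
  have c1: "0 < c1" unfolding c1_def by (rule DG_pos[OF D Dnz])
  define c0 where "c0 = fro T0"
  have c0: "0 \<le> c0" unfolding c0_def by (rule fro_nonneg)
  have T0K: "err_op K0 H L = T0" unfolding T0_def ..
  show ?thesis
  proof (cases "\<rho> = 0 \<or> T0 = 0\<^sub>m Ns ?N")
    case True
    have one: "1\<^sub>m ?N \<in> carrier_mat ?N ?N" by simp
    have "ennreal (fro (err_op K H L * 1\<^sub>m ?N)) \<le> worst_mse H L K P0 \<rho>"
      by (rule worst_lb[OF K one]) (simp add: fro_def)
    moreover have "fro (err_op K H L * 1\<^sub>m ?N) = c0 + c1"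
      unfolding c0_def c1_def using lb_val[OF K one] T0_carrier G_carrier by simp
    ultimately have lbK: "ennreal (c0 + c1) \<le> worst_mse H L K P0 \<rho>" by simp
    define e where "e = c1 / (2 * (c0 + 1))"
    have e: "0 < e" unfolding e_def using c0 c1 by simp
    define a where "a = (1 + 1 / e) * c0"
    have a: "0 \<le> a" unfolding a_def using e c0 by simp
    have ub0: "worst_mse H L K0 P0 \<rho> \<le> ennreal (a * \<rho>^2) + (\<integral>\<^sup>+y. ennreal ((1 + e) * quadf T0 ?N y) \<partial>P0)"
    proof (rule worst_ub[OF K0_carrier])
      show "(\<lambda>y. (1 + e) * quadf T0 ?N y) \<in> borel_measurable (RN ?N)"
        by (intro borel_measurable_times borel_measurable_const quadf_meas[OF T0_carrier])
      show "0 \<le> a" by (rule a)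
      show "\<And>y. 0 \<le> (1 + e) * quadf T0 ?N y" using e quadf_nonneg by simp
      fix x y
      have "nsq (T0 *\<^sub>v Matrix.vec ?N x) \<le> (1 + e) * nsq (T0 *\<^sub>v Matrix.vec ?N y) + (1 + 1 / e) * fro T0 * nsq (Matrix.vec ?N x - Matrix.vec ?N y)"
        by (rule eps_bound[OF T0_carrier _ _ e]) auto
      thus "quadf (err_op K0 H L) ?N x \<le> a * sqnorm ?N (\<lambda>i. x i - y i) + (1 + e) * quadf T0 ?N y"
        unfolding T0K a_def c0_def sqnorm_diff_vec by (simp add: quadf_def nsq_def algebra_simps)
    qed
    have "(\<integral>\<^sup>+y. ennreal ((1 + e) * quadf T0 ?N y) \<partial>P0) = (\<integral>\<^sup>+y. ennreal (1 + e) * ennreal (quadf T0 ?N y) \<partial>P0)"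
      using e quadf_nonneg by (simp add: ennreal_mult)
    also have "\<dots> = ennreal (1 + e) * (\<integral>\<^sup>+y. ennreal (quadf T0 ?N y) \<partial>P0)"
      by (rule nn_integral_cmult, rule ic.meas_P0, rule enn_meas, rule quadf_meas[OF T0_carrier])
    also have "\<dots> = ennreal ((1 + e) * c0)"
      unfolding ic.nn_quadf[OF T0_carrier] c0_def using e by (simp add: ennreal_mult fro_nonneg)
    finally have int: "(\<integral>\<^sup>+y. ennreal ((1 + e) * quadf T0 ?N y) \<partial>P0) = ennreal ((1 + e) * c0)" .
    have bound: "a * \<rho>^2 + (1 + e) * c0 < c0 + c1"
    proof (cases "\<rho> = 0")
      case True
      have "e * c0 < c1"
      proof -
        have "e * c0 = c1 * (c0 / (2 * (c0 + 1)))" unfolding e_def by simp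
        also have "\<dots> < c1 * 1" using c1 c0 by (intro mult_strict_left_mono) (auto simp: field_simps)
        finally show ?thesis by simp
      qed
      thus ?thesis using True by (simp add: algebra_simps)
    next
      case False
      with `\<rho> = 0 \<or> T0 = 0\<^sub>m Ns ?N` have "T0 = 0\<^sub>m Ns ?N" by simp
      hence "c0 = 0" unfolding c0_def by (simp add: fro_def)
      thus ?thesis using c1 by (simp add: a_def)
    qed
    have "worst_mse H L K0 P0 \<rho> \<le> ennreal (a * \<rho>^2 + (1 + e) * c0)"
      using ub0 int a e c0 by (simp add: ennreal_plus)
    also have "\<dots> < ennreal (c0 + c1)" using bound a e c0 by (subst ennreal_less_iff) auto
    also have "\<dots> \<le> worst_mse H L K P0 \<rho>" by (rule lbK)
    finally show ?thesis .
  next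
    case False
    hence rp: "\<rho> > 0" and nz: "T0 \<noteq> 0\<^sub>m Ns ?N" using rho by auto
    interpret g: gm T0 Ns ?N using T0_carrier Npos by unfold_locales
    obtain g where g: "g > g.lam" and Fg: "g.F g = \<rho>^2" using g.exists_gamma[OF nz rp] by blast
    define A where "A = g \<cdot>\<^sub>m g.R g"
    have Rc: "g.R g \<in> carrier_mat ?N ?N" by (rule g.R_carrier[OF g])
    have Ac: "A \<in> carrier_mat ?N ?N" unfolding A_def using Rc by simp
    have AI: "A - 1\<^sub>m ?N = g.R g * g.M" unfolding A_def by (rule g.RM_eq[OF g, symmetric])
    have frA: "fro (A - 1\<^sub>m ?N) = \<rho>^2" unfolding AI using Fg by (simp add: g.F_def)
    have Asym: "transpose_mat A = A"
    proof (rule eq_matI)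
      fix i j assume "i < dim_row A" "j < dim_col A"
      hence ij: "i < ?N" "j < ?N" using Ac by auto
      have "g.R g $$ (j,i) = g.R g $$ (i,j)" using arg_cong[OF g.R_sym[OF g], of "\<lambda>X. X $$ (i,j)"] ij Rc by simp
      thus "transpose_mat A $$ (i,j) = A $$ (i,j)" unfolding A_def using ij Rc by simp
    qed (use Ac in auto)
    have Gt: "transpose_mat G \<in> carrier_mat ?N Ny" using G_carrier by simp
    have MG: "g.M * transpose_mat G = 0\<^sub>m ?N Ny"
    proof -
      have "g.M * transpose_mat G = transpose_mat T0 * (T0 * transpose_mat G)"
        unfolding g.M_def using T0_carrier Gt by (simp add: assoc_mult_mat[of _ ?N Ns _ ?N _ Ny])
      thus ?thesis using orth T0_carrier by simp
    qed
    have PG: "g.P g * transpose_mat G = g \<cdot>\<^sub>m transpose_mat G"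
    proof -
      have "g.P g * transpose_mat G = (g \<cdot>\<^sub>m 1\<^sub>m ?N) * transpose_mat G - g.M * transpose_mat G"
        unfolding g.P_def by (rule minus_mult_distrib_mat[OF _ g.M_carrier Gt]) simp
      also have "(g \<cdot>\<^sub>m 1\<^sub>m ?N) * transpose_mat G = g \<cdot>\<^sub>m transpose_mat G"
        using Gt by (simp add: mult_smult_assoc_mat[of _ ?N ?N _ Ny])
      finally show ?thesis unfolding MG by (rule trans, intro eq_matI) (use Gt in auto)
    qed
    have AG: "A * transpose_mat G = transpose_mat G"
    proof -
      have RP: "g.R g * g.P g = 1\<^sub>m ?N" using g.R_props[OF g] by simp
      have "transpose_mat G = (g.R g * g.P g) * transpose_mat G" using RP Gt by simp
      also have "\<dots> = g.R g * (g.P g * transpose_mat G)" using Rc Gt by (simp add: assoc_mult_mat[of _ ?N ?N _ ?N _ Ny])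
      also have "\<dots> = g.R g * (g \<cdot>\<^sub>m transpose_mat G)" unfolding PG ..
      also have "\<dots> = g \<cdot>\<^sub>m (g.R g * transpose_mat G)" using Rc Gt by (simp add: mult_smult_distrib)
      also have "\<dots> = A * transpose_mat G" unfolding A_def using Rc Gt by (simp add: mult_smult_assoc_mat)
      finally show ?thesis by simp
    qed
    have GA: "G * A = G"
    proof -
      have "transpose_mat (G * A) = transpose_mat A * transpose_mat G"
        using G_carrier Ac by (simp add: transpose_mult[of _ Ny ?N _ ?N])
      also have "\<dots> = transpose_mat G" using Asym AG by simp
      finally show ?thesis by simp
    qed
    have lbK: "ennreal (fro (T0 * A) + c1) \<le> worst_mse H L K P0 \<rho>"
      using worst_lb[OF K Ac, of \<rho>] frA lb_val[OF K Ac GA AG] unfolding c1_def by simp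
    define q where "q = (\<lambda>y. quadf (T0 * A) ?N y - g * quadf (A - 1\<^sub>m ?N) ?N y)"
    have TAc: "T0 * A \<in> carrier_mat Ns ?N" using T0_carrier Ac by simp
    have AIc: "A - 1\<^sub>m ?N \<in> carrier_mat ?N ?N" by (rule minus_carrier_mat[OF one_carrier_mat])
    have pw: "quadf (err_op K0 H L) ?N x \<le> g * sqnorm ?N (\<lambda>i. x i - y i) + q y" for x y
    proof -
      have vx: "Matrix.vec ?N x \<in> carrier_vec ?N" and vy: "Matrix.vec ?N y \<in> carrier_vec ?N" by auto
      have e1: "(T0 * A) *\<^sub>v Matrix.vec ?N y = T0 *\<^sub>v (A *\<^sub>v Matrix.vec ?N y)"
        using T0_carrier Ac vy by simp
      have e2: "(A - 1\<^sub>m ?N) *\<^sub>v Matrix.vec ?N y = A *\<^sub>v Matrix.vec ?N y - Matrix.vec ?N y"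
        using minus_mult_distrib_mat_vec[OF Ac one_carrier_mat vy] vy by simp
      show ?thesis
        using g.ub_vec[OF g vx vy] unfolding q_def T0K sqnorm_diff_vec A_def[symmetric]
        by (simp add: quadf_def nsq_def e1 e2)
    qed
    have qn: "0 \<le> q y" for y
    proof -
      have "quadf (err_op K0 H L) ?N y \<le> g * sqnorm ?N (\<lambda>i. y i - y i) + q y" by (rule pw)
      moreover have "sqnorm ?N (\<lambda>i. y i - y i) = 0" by (simp add: sqnorm_def)
      ultimately show ?thesis using quadf_nonneg[of "err_op K0 H L" ?N y] by simp
    qed
    have qm: "q \<in> borel_measurable (RN ?N)"
      unfolding q_def by (intro borel_measurable_diff borel_measurable_times borel_measurable_const quadf_meas[OF TAc] quadf_meas[OF AIc])
    have g0: "0 \<le> g" using g g.lam_nonneg by simp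
    have ub0: "worst_mse H L K0 P0 \<rho> \<le> ennreal (g * \<rho>^2) + (\<integral>\<^sup>+y. ennreal (q y) \<partial>P0)"
      by (rule worst_ub[OF K0_carrier qm g0 qn pw])
    have iq: "integrable P0 q" "integral\<^sup>L P0 q = fro (T0 * A) - g * \<rho>^2"
    proof -
      have i1: "integrable P0 (quadf (T0 * A) ?N)" "integral\<^sup>L P0 (quadf (T0 * A) ?N) = fro (T0 * A)"
        using ic.int_quadf[OF TAc] by auto
      have i2: "integrable P0 (quadf (A - 1\<^sub>m ?N) ?N)" "integral\<^sup>L P0 (quadf (A - 1\<^sub>m ?N) ?N) = \<rho>^2"
        using ic.int_quadf[OF AIc] frA by auto
      show "integrable P0 q" unfolding q_def using i1 i2 by auto
      show "integral\<^sup>L P0 q = fro (T0 * A) - g * \<rho>^2" unfolding q_def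
        using i1 i2 by (subst Bochner_Integration.integral_diff) auto
    qed
    have "(\<integral>\<^sup>+y. ennreal (q y) \<partial>P0) = ennreal (fro (T0 * A) - g * \<rho>^2)"
      using iq qn by (subst nn_integral_eq_integral) auto
    moreover have "0 \<le> fro (T0 * A) - g * \<rho>^2" using iq qn by (metis integral_nonneg_AE AE_I2)
    ultimately have "worst_mse H L K0 P0 \<rho> \<le> ennreal (fro (T0 * A))"
      using ub0 g0 by (simp add: ennreal_plus[symmetric])
    also have "\<dots> < ennreal (fro (T0 * A) + c1)" using c1 fro_nonneg[of "T0 * A"] by (subst ennreal_less_iff) auto
    also have "\<dots> \<le> worst_mse H L K P0 \<rho>" by (rule lbK)
    finally show ?thesis .
  qed
qed

end



lemma horizon_carrier: "horizon_op A B C T \<in> carrier_mat (T * dim_row C) (dim_row A + (T - 1) * dim_col B)"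
  by (simp add: horizon_op_def Let_def)

theorem lemma3p3:
  fixes A B Cy Cs :: "real mat" and dx dw dy ds T :: nat
    and P0 :: "(nat \<Rightarrow> real) measure"
  assumes dims: "0 < dx" "0 < dw" "0 < dy" "0 < ds"
    and A: "A \<in> carrier_mat dx dx" and B: "B \<in> carrier_mat dx dw"
    and Cy: "Cy \<in> carrier_mat dy dx" and Cs: "Cs \<in> carrier_mat ds dx"
    and det_y: "detectable A Cy" and det_s: "detectable A Cs"
    and ctrb: "controllable A B"
    and T: "0 < T"
    and nominal: "P0 \<in> distrs2 ((dx + (T - 1) * dw) + T * dy)"
    and zero_mean: "\<forall>i < (dx + (T - 1) * dw) + T * dy. (\<integral>xi. xi i \<partial>P0) = 0"
    and identity_cov: "\<forall>i < (dx + (T - 1) * dw) + T * dy. \<forall>j < (dx + (T - 1) * dw) + T * dy.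
                         (\<integral>xi. xi i * xi j \<partial>P0) = (if i = j then 1 else 0)"
  shows "\<forall>rho \<ge> 0.
           central_estimator (horizon_op A B Cy T) (horizon_op A B Cs T) \<in> carrier_mat (T * ds) (T * dy)
         \<and> (\<forall>K \<in> carrier_mat (T * ds) (T * dy).
              K \<noteq> central_estimator (horizon_op A B Cy T) (horizon_op A B Cs T) \<longrightarrow>
              worst_mse (horizon_op A B Cy T) (horizon_op A B Cs T)
                 (central_estimator (horizon_op A B Cy T) (horizon_op A B Cs T)) P0 rho
              < worst_mse (horizon_op A B Cy T) (horizon_op A B Cs T) K P0 rho)"
proof -
  have Hc: "horizon_op A B Cy T \<in> carrier_mat (T * dy) (dx + (T - 1) * dw)"
    using horizon_carrier[of A B Cy T] A B Cy by simp
  have Lc: "horizon_op A B Cs T \<in> carrier_mat (T * ds) (dx + (T - 1) * dw)"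
    using horizon_carrier[of A B Cs T] A B Cs by simp
  interpret e: est "horizon_op A B Cy T" "horizon_op A B Cs T" "dx + (T - 1) * dw" "T * dy" "T * ds" P0
    using Hc Lc dims nominal identity_cov by unfold_locales auto
  show ?thesis using e.K0_carrier e.main unfolding e.K0_def by auto
qed

end
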